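(* Let $\Lambda:\mathcal{B}(\mathcal{H}_d)\to\mathcal{B}(\mathcal{H}_d)$ be a quantum operation. Then the map $$\Lambda'_{\min}[\varrho]=\sqrt{I-\Lambda^{\dagger}[I]}\,\varrho\,\sqrt{I-\Lambda^{\dagger}[I]}$$ is an extension for $\Lambda$, and any extension $\Lambda'$ for $\Lambda$ has the form $\Lambda'=\Phi\circ\Lambda'_{\min}$ for some quantum channel $\Phi:\mathcal{B}(\mathcal{H}_d)\to\mathcal{B}(\mathcal{H}_d)$.
   Context: $\mathcal{H}_d$ is a Hilbert space of finite dimension $d>1$. A quantum operation is a linear map $\Lambda:\mathcal{B}(\mathcal{H}_d)\to\mathcal{B}(\mathcal{H}_d)$ that is completely positive and trace nonincreasing, equivalently $\Lambda^\dagger[I]\le I$, where $\Lambda^\dagger$ is the dual map defined by $\mathrm{tr}[\Lambda[X]Y]=\mathrm{tr}[X\Lambda^\dagger[Y]]$. A quantum channel is a completely positive trace preserving map ($\Phi^\dagger[I]=I$). A quantum operation $\Lambda'$ is called an extension for the quantum operation $\Lambda$ if $\Lambda+\Lambda'$ is trace preserving. *)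

theory Defs
  imports "Jordan_Normal_Form.Matrix"
begin

text \<open>Operators on H_d are complex d x d matrices (carrier_mat d d).
  Maps B(H_d) -> B(H_d) are functions complex mat => complex mat; only their
  behaviour on carrier_mat d d matters.\<close>

definition mtrace :: "complex mat \<Rightarrow> complex" where
  "mtrace A = (\<Sum>i<dim_row A. A $$ (i, i))"

definition qf :: "complex mat \<Rightarrow> complex vec \<Rightarrow> complex" where
  "qf A v = (\<Sum>i<dim_vec v. \<Sum>j<dim_vec v. cnj (v $ i) * A $$ (i, j) * v $ j)"

definition psd :: "nat \<Rightarrow> complex mat \<Rightarrow> bool" where
  "psd n A \<longleftrightarrow> A \<in> carrier_mat n n \<and>
     (\<forall>v \<in> carrier_vec n. \<exists>r::real. r \<ge> 0 \<and> qf A v = complex_of_real r)"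

definition loewner_le :: "nat \<Rightarrow> complex mat \<Rightarrow> complex mat \<Rightarrow> bool" where
  "loewner_le n A B \<longleftrightarrow> A \<in> carrier_mat n n \<and> B \<in> carrier_mat n n \<and> psd n (B - A)"

definition psd_sqrt :: "nat \<Rightarrow> complex mat \<Rightarrow> complex mat" where
  "psd_sqrt n A = (THE B. psd n B \<and> B * B = A)"

definition linear_map :: "nat \<Rightarrow> (complex mat \<Rightarrow> complex mat) \<Rightarrow> bool" where
  "linear_map d L \<longleftrightarrow>
     (\<forall>X \<in> carrier_mat d d. L X \<in> carrier_mat d d) \<and>
     (\<forall>X \<in> carrier_mat d d. \<forall>Y \<in> carrier_mat d d. L (X + Y) = L X + L Y) \<and>
     (\<forall>X \<in> carrier_mat d d. \<forall>c::complex. L (c \<cdot>\<^sub>m X) = c \<cdot>\<^sub>m L X)"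

definition dual_map :: "nat \<Rightarrow> (complex mat \<Rightarrow> complex mat) \<Rightarrow> complex mat \<Rightarrow> complex mat" where
  "dual_map d L Y = (THE Z. Z \<in> carrier_mat d d \<and>
     (\<forall>X \<in> carrier_mat d d. mtrace (L X * Y) = mtrace (X * Z)))"

text \<open>The (a,b) block (of size d x d) of a (k d) x (k d) matrix, i.e. an element of
  B(C^k \<otimes> H_d) viewed as a k x k block matrix with entries in B(H_d).\<close>
definition block :: "nat \<Rightarrow> complex mat \<Rightarrow> nat \<Rightarrow> nat \<Rightarrow> complex mat" where
  "block d M a b = mat d d (\<lambda>(i, j). M $$ (a * d + i, b * d + j))"

text \<open>id_k \<otimes> L acting on B(C^k \<otimes> H_d): apply L blockwise.\<close>
definition ampliation :: "nat \<Rightarrow> nat \<Rightarrow> (complex mat \<Rightarrow> complex mat) \<Rightarrow> complex mat \<Rightarrow> complex mat" where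
  "ampliation d k L M = mat (k * d) (k * d)
     (\<lambda>(r, s). L (block d M (r div d) (s div d)) $$ (r mod d, s mod d))"

definition completely_positive :: "nat \<Rightarrow> (complex mat \<Rightarrow> complex mat) \<Rightarrow> bool" where
  "completely_positive d L \<longleftrightarrow>
     (\<forall>k::nat. \<forall>M. psd (k * d) M \<longrightarrow> psd (k * d) (ampliation d k L M))"

definition trace_nonincreasing :: "nat \<Rightarrow> (complex mat \<Rightarrow> complex mat) \<Rightarrow> bool" where
  "trace_nonincreasing d L \<longleftrightarrow> loewner_le d (dual_map d L (1\<^sub>m d)) (1\<^sub>m d)"

definition trace_preserving :: "nat \<Rightarrow> (complex mat \<Rightarrow> complex mat) \<Rightarrow> bool" where
  "trace_preserving d L \<longleftrightarrow> (\<forall>X \<in> carrier_mat d d. mtrace (L X) = mtrace X)"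

definition quantum_operation :: "nat \<Rightarrow> (complex mat \<Rightarrow> complex mat) \<Rightarrow> bool" where
  "quantum_operation d L \<longleftrightarrow> linear_map d L \<and> completely_positive d L \<and> trace_nonincreasing d L"

definition quantum_channel :: "nat \<Rightarrow> (complex mat \<Rightarrow> complex mat) \<Rightarrow> bool" where
  "quantum_channel d L \<longleftrightarrow> linear_map d L \<and> completely_positive d L \<and> trace_preserving d L"

definition is_extension :: "nat \<Rightarrow> (complex mat \<Rightarrow> complex mat) \<Rightarrow> (complex mat \<Rightarrow> complex mat) \<Rightarrow> bool" where
  "is_extension d L L' \<longleftrightarrow> quantum_operation d L' \<and> trace_preserving d (\<lambda>X. L X + L' X)"

definition min_extension :: "nat \<Rightarrow> (complex mat \<Rightarrow> complex mat) \<Rightarrow> complex mat \<Rightarrow> complex mat" where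
  "min_extension d L \<rho> =
     (let S = psd_sqrt d (1\<^sub>m d - dual_map d L (1\<^sub>m d)) in S * \<rho> * S)"

end

theory Submission
  imports Defs "Jordan_Normal_Form.Spectral_Radius" "Jordan_Normal_Form.Schur_Decomposition"
begin

definition adj :: "complex mat \<Rightarrow> complex mat" where
  "adj M = mat (dim_col M) (dim_row M) (\<lambda>(i,j). cnj (M $$ (j,i)))"

lemma dim_adj[simp]: "dim_row (adj M) = dim_col M" "dim_col (adj M) = dim_row M"
  by (auto simp: adj_def)

lemma adj_carrier[simp]: "M \<in> carrier_mat n m \<Longrightarrow> adj M \<in> carrier_mat m n"
  by (auto simp: adj_def)

lemma adj_index[simp]: "i < dim_col M \<Longrightarrow> j < dim_row M \<Longrightarrow> adj M $$ (i,j) = cnj (M $$ (j,i))"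
  by (auto simp: adj_def)

lemma adj_adj[simp]: "adj (adj M) = M"
  by (rule eq_matI) auto

lemma adj_mult: assumes "A \<in> carrier_mat n m" "B \<in> carrier_mat m k"
  shows "adj (A * B) = adj B * adj A"
  by (rule eq_matI) (use assms in \<open>auto simp: scalar_prod_def mult.commute intro!: sum.cong\<close>)

lemma adj_one[simp]: "adj (1\<^sub>m n) = 1\<^sub>m n"
  by (rule eq_matI) auto

lemma adj_zero[simp]: "adj (0\<^sub>m n m) = 0\<^sub>m m n"
  by (rule eq_matI) auto

lemma adj_add: assumes "A \<in> carrier_mat n m" "B \<in> carrier_mat n m"
  shows "adj (A + B) = adj A + adj B"
  by (rule eq_matI) (use assms in auto)

lemma adj_minus: assumes "A \<in> carrier_mat n m" "B \<in> carrier_mat n m"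
  shows "adj (A - B) = adj A - adj B"
  by (rule eq_matI) (use assms in auto)

lemma cnj_sum': "cnj (sum f A) = sum (\<lambda>x. cnj (f x)) A"
  by (rule cnj_sum)

lemma qf_alt: assumes "A \<in> carrier_mat n n" "v \<in> carrier_vec n"
  shows "qf A v = conjugate v \<bullet> (A *\<^sub>v v)"
  using assms by (auto simp: qf_def scalar_prod_def sum_distrib_left mult.assoc
      intro!: sum.cong)

lemma inner_adj: assumes "K \<in> carrier_mat n m" "v \<in> carrier_vec m" "w \<in> carrier_vec n"
  shows "conjugate v \<bullet> (adj K *\<^sub>v w) = conjugate (K *\<^sub>v v) \<bullet> w"
proof -
  have "conjugate v \<bullet> (adj K *\<^sub>v w) = (\<Sum>i<m. cnj (v$i) * (\<Sum>q<n. cnj (K$$(q,i)) * w$q))"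
    using assms by (auto simp: scalar_prod_def atLeast0LessThan intro!: sum.cong)
  also have "\<dots> = (\<Sum>q<n. (\<Sum>i<m. cnj (K$$(q,i)) * cnj (v$i)) * w$q)"
    by (simp add: sum_distrib_left sum_distrib_right mult_ac sum.swap[of _ "{..<n}"])
  also have "\<dots> = conjugate (K *\<^sub>v v) \<bullet> w"
    using assms by (auto simp: scalar_prod_def atLeast0LessThan intro!: sum.cong)
  finally show ?thesis .
qed

lemma qf_congr: assumes K: "K \<in> carrier_mat n m" and M: "M \<in> carrier_mat n n" and v: "v \<in> carrier_vec m"
  shows "qf (adj K * M * K) v = qf M (K *\<^sub>v v)"
proof -
  have "qf (adj K * M * K) v = conjugate v \<bullet> ((adj K * M * K) *\<^sub>v v)"
    using assms by (intro qf_alt) auto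
  also have "(adj K * M * K) *\<^sub>v v = adj K *\<^sub>v (M *\<^sub>v (K *\<^sub>v v))"
  proof -
    have "(adj K * M * K) *\<^sub>v v = (adj K * M) *\<^sub>v (K *\<^sub>v v)"
      using assms by (intro assoc_mult_mat_vec[of _ m n _ m]) auto
    also have "\<dots> = adj K *\<^sub>v (M *\<^sub>v (K *\<^sub>v v))"
      using assms by (intro assoc_mult_mat_vec[of _ m n _ n]) auto
    finally show ?thesis .
  qed
  also have "conjugate v \<bullet> \<dots> = conjugate (K *\<^sub>v v) \<bullet> (M *\<^sub>v (K *\<^sub>v v))"
    using assms by (intro inner_adj) auto
  also have "\<dots> = qf M (K *\<^sub>v v)"
    using assms by (intro qf_alt[symmetric]) auto
  finally show ?thesis .
qed

lemma nonneg_complex_iff: "(\<exists>r::real. r \<ge> 0 \<and> z = complex_of_real r) \<longleftrightarrow> 0 \<le> z"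
  by (auto simp: less_eq_complex_def complex_eq_iff intro!: exI[of _ "Re z"])

lemma psd_iff: "psd n A \<longleftrightarrow> A \<in> carrier_mat n n \<and> (\<forall>v \<in> carrier_vec n. 0 \<le> qf A v)"
  unfolding psd_def nonneg_complex_iff ..

lemma psd_congr: assumes "psd n M" "K \<in> carrier_mat n m"
  shows "psd m (adj K * M * K)"
  using assms by (auto simp: psd_iff qf_congr)

lemma qf_add: assumes "A \<in> carrier_mat n n" "B \<in> carrier_mat n n" "v \<in> carrier_vec n"
  shows "qf (A + B) v = qf A v + qf B v"
  using assms by (auto simp: qf_def algebra_simps sum.distrib)

lemma psd_add: assumes "psd n A" "psd n B" shows "psd n (A + B)"
  using assms by (auto simp: psd_iff qf_add)

lemma sum_two: fixes n :: nat assumes "i < n" "j < n" "i \<noteq> j" "\<And>k. k < n \<Longrightarrow> k \<noteq> i \<Longrightarrow> k \<noteq> j \<Longrightarrow> f k = 0"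
  shows "(\<Sum>k<n. f k) = f i + f j"
proof -
  have "(\<Sum>k<n. f k) = (\<Sum>k\<in>{i,j}. f k)"
    using assms by (intro sum.mono_neutral_right) auto
  thus ?thesis using assms by simp
qed

lemma sum_one: fixes n :: nat assumes "i < n" "\<And>k. k < n \<Longrightarrow> k \<noteq> i \<Longrightarrow> f k = 0"
  shows "(\<Sum>k<n. f k) = f i"
proof -
  have "(\<Sum>k<n. f k) = (\<Sum>k\<in>{i}. f k)"
    using assms by (intro sum.mono_neutral_right) auto
  thus ?thesis using assms by simp
qed


lemma qf_supp2: assumes "A \<in> carrier_mat n n" "v \<in> carrier_vec n" "i < n" "j < n" "i \<noteq> j"
  "\<And>k. k < n \<Longrightarrow> k \<noteq> i \<Longrightarrow> k \<noteq> j \<Longrightarrow> v $ k = 0"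
  shows "qf A v = cnj (v$i) * v$i * A$$(i,i) + cnj (v$i) * v$j * A$$(i,j) + cnj (v$j) * v$i * A$$(j,i) + cnj (v$j) * v$j * A$$(j,j)"
proof -
  have "qf A v = (\<Sum>k<n. \<Sum>l<n. cnj (v$k) * A$$(k,l) * v$l)"
    using assms by (simp add: qf_def)
  also have "\<dots> = (\<Sum>k<n. cnj (v$k) * A$$(k,i) * v$i + cnj (v$k) * A$$(k,j) * v$j)"
    by (rule sum.cong[OF refl], rule sum_two) (use assms in auto)
  also have "\<dots> = (cnj (v$i) * A$$(i,i) * v$i + cnj (v$i) * A$$(i,j) * v$j) + (cnj (v$j) * A$$(j,i) * v$i + cnj (v$j) * A$$(j,j) * v$j)"
    by (rule sum_two) (use assms in auto)
  finally show ?thesis by (simp add: algebra_simps)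
qed

definition vec2 :: "nat \<Rightarrow> nat \<Rightarrow> nat \<Rightarrow> complex \<Rightarrow> complex \<Rightarrow> complex vec" where
  "vec2 n i j a b = vec n (\<lambda>k. if k = i then a else if k = j then b else 0)"

lemma vec2_carrier[simp]: "vec2 n i j a b \<in> carrier_vec n" by (simp add: vec2_def)

lemma qf_vec2: assumes "A \<in> carrier_mat n n" "i < n" "j < n" "i \<noteq> j"
  shows "qf A (vec2 n i j a b) = cnj a * a * A$$(i,i) + cnj a * b * A$$(i,j) + cnj b * a * A$$(j,i) + cnj b * b * A$$(j,j)"
  using assms by (subst qf_supp2[of A n _ i j]) (auto simp: vec2_def)

lemma qf_supp1: assumes "A \<in> carrier_mat n n" "v \<in> carrier_vec n" "i < n"
  "\<And>k. k < n \<Longrightarrow> k \<noteq> i \<Longrightarrow> v $ k = 0"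
  shows "qf A v = cnj (v$i) * v$i * A$$(i,i)"
proof -
  have "qf A v = (\<Sum>k<n. \<Sum>l<n. cnj (v$k) * A$$(k,l) * v$l)"
    using assms by (simp add: qf_def)
  also have "\<dots> = (\<Sum>k<n. cnj (v$k) * A$$(k,i) * v$i)"
    by (rule sum.cong[OF refl], rule sum_one) (use assms in auto)
  also have "\<dots> = cnj (v$i) * A$$(i,i) * v$i"
    by (rule sum_one) (use assms in auto)
  finally show ?thesis by (simp add: algebra_simps)
qed

lemma qf_unit: assumes "A \<in> carrier_mat n n" "i < n"
  shows "qf A (unit_vec n i) = A $$ (i,i)"
  using assms by (subst qf_supp1[of A n _ i]) auto

lemma psd_diag: assumes "psd n A" "i < n" shows "0 \<le> A $$ (i,i)"
  using assms qf_unit[of A n i] unfolding psd_iff by (metis unit_vec_carrier)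

lemma real_lin_nonneg_zero: assumes "\<And>t::real. 0 \<le> complex_of_real t * c + z"
  shows "c = 0"
proof -
  from assms[of 0] have z: "Im z = 0" "Re z \<ge> 0" by (auto simp: less_eq_complex_def)
  from assms[of 1] z have ic: "Im c = 0" by (auto simp: less_eq_complex_def)
  have rc: "Re c = 0"
  proof (rule ccontr)
    assume "Re c \<noteq> 0"
    define t where "t = - (Re z + 1) / Re c"
    from assms[of t] have "0 \<le> t * Re c + Re z" by (auto simp: less_eq_complex_def)
    also have "t * Re c = - (Re z + 1)" using \<open>Re c \<noteq> 0\<close> by (simp add: t_def)
    finally show False by simp
  qed
  from ic rc show ?thesis by (simp add: complex_eq_iff)
qed

lemma psd_zero_diag: assumes "psd n A" "i < n" "A $$ (i,i) = 0" "j < n"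
  shows "A $$ (i,j) = 0 \<and> A $$ (j,i) = 0"
proof (cases "i = j")
  case True thus ?thesis using assms by simp
next
  case False
  have A: "A \<in> carrier_mat n n" using assms by (simp add: psd_iff)
  have jj: "0 \<le> A $$ (j,j)" using psd_diag assms by auto
  have q: "0 \<le> qf A (vec2 n i j a 1)" for a using assms by (auto simp: psd_iff)
  have c1: "A $$ (i,j) + A $$ (j,i) = 0"
  proof (rule real_lin_nonneg_zero[where z = "A$$(j,j)"])
    fix t :: real
    show "0 \<le> complex_of_real t * (A $$ (i,j) + A $$ (j,i)) + A $$ (j,j)"
      using q[of "complex_of_real t"] qf_vec2[OF A assms(2) assms(4) False, of "complex_of_real t" 1] assms(3)
      by (simp add: algebra_simps)
  qed
  have c2: "\<i> * (A $$ (j,i) - A $$ (i,j)) = 0"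
  proof (rule real_lin_nonneg_zero[where z = "A$$(j,j)"])
    fix t :: real
    show "0 \<le> complex_of_real t * (\<i> * (A $$ (j,i) - A $$ (i,j))) + A $$ (j,j)"
      using q[of "\<i> * complex_of_real t"] qf_vec2[OF A assms(2) assms(4) False, of "\<i> * complex_of_real t" 1] assms(3)
      by (simp add: algebra_simps)
  qed
  from c1 c2 show ?thesis by (simp add: algebra_simps)
qed

lemma mtrace_alt: "A \<in> carrier_mat n n \<Longrightarrow> mtrace A = (\<Sum>i<n. A$$(i,i))"
  by (simp add: mtrace_def)

lemma mtrace_comm: assumes "A \<in> carrier_mat n m" "B \<in> carrier_mat m n"
  shows "mtrace (A * B) = mtrace (B * A)"
proof -
  have "mtrace (A * B) = (\<Sum>i<n. \<Sum>k<m. A$$(i,k) * B$$(k,i))"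
    using assms by (auto simp: mtrace_def scalar_prod_def atLeast0LessThan intro!: sum.cong)
  also have "\<dots> = (\<Sum>k<m. \<Sum>i<n. B$$(k,i) * A$$(i,k))"
    by (subst sum.swap) (simp add: mult.commute)
  also have "\<dots> = mtrace (B * A)"
    using assms by (auto simp: mtrace_def scalar_prod_def atLeast0LessThan intro!: sum.cong)
  finally show ?thesis .
qed

lemma mtrace_add: assumes "A \<in> carrier_mat n n" "B \<in> carrier_mat n n"
  shows "mtrace (A + B) = mtrace A + mtrace B"
  using assms by (simp add: mtrace_def sum.distrib)

lemma mtrace_minus: assumes "A \<in> carrier_mat n n" "B \<in> carrier_mat n n"
  shows "mtrace (A - B) = mtrace A - mtrace B"
  using assms by (simp add: mtrace_def sum_subtractf)

lemma mtrace_smult: "A \<in> carrier_mat n n \<Longrightarrow> mtrace (c \<cdot>\<^sub>m A) = c * mtrace A"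
  by (simp add: mtrace_def sum_distrib_left)

definition outer :: "complex vec \<Rightarrow> complex vec \<Rightarrow> complex mat" where
  "outer x y = mat (dim_vec x) (dim_vec y) (\<lambda>(i,j). x$i * cnj (y$j))"

lemma outer_carrier[simp]: "x \<in> carrier_vec n \<Longrightarrow> y \<in> carrier_vec m \<Longrightarrow> outer x y \<in> carrier_mat n m"
  by (simp add: outer_def)

lemma dim_outer[simp]: "dim_row (outer x y) = dim_vec x" "dim_col (outer x y) = dim_vec y"
  by (auto simp: outer_def)

lemma outer_index[simp]: "i < dim_vec x \<Longrightarrow> j < dim_vec y \<Longrightarrow> outer x y $$ (i,j) = x$i * cnj (y$j)"
  by (simp add: outer_def)

lemma mtrace_outer: assumes "Z \<in> carrier_mat n n" "v \<in> carrier_vec n"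
  shows "mtrace (outer v v * Z) = qf Z v"
proof -
  have "mtrace (outer v v * Z) = (\<Sum>i<n. \<Sum>k<n. v$i * cnj (v$k) * Z$$(k,i))"
    using assms by (auto simp: mtrace_def scalar_prod_def atLeast0LessThan intro!: sum.cong)
  also have "\<dots> = (\<Sum>k<n. \<Sum>i<n. cnj (v$k) * Z$$(k,i) * v$i)"
    by (subst sum.swap) (simp add: mult_ac)
  also have "\<dots> = qf Z v" using assms by (simp add: qf_def)
  finally show ?thesis .
qed

lemma psd_outer: assumes "v \<in> carrier_vec n" shows "psd n (outer v v)"
  unfolding psd_iff
proof (intro conjI ballI)
  show "outer v v \<in> carrier_mat n n" using assms by simp
  fix w :: "complex vec" assume w: "w \<in> carrier_vec n"
  define s where "s = (\<Sum>j<n. cnj (v$j) * w$j)"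
  have "qf (outer v v) w = (\<Sum>i<n. \<Sum>j<n. (cnj (w$i) * v$i) * (cnj (v$j) * w$j))"
    using assms w by (auto simp: qf_def mult_ac intro!: sum.cong)
  also have "\<dots> = cnj s * s"
    unfolding s_def cnj_sum sum_product by (auto simp: mult_ac intro!: sum.cong)
  also have "\<dots> = complex_of_real ((cmod s)^2)"
    by (metis complex_norm_square mult.commute of_real_power)
  finally show "0 \<le> qf (outer v v) w" by (simp add: less_eq_complex_def)
qed

lemma psd_hermitian: assumes "psd n A" shows "adj A = A"
proof -
  have A: "A \<in> carrier_mat n n" using assms by (simp add: psd_iff)
  have q: "0 \<le> qf A v" if "v \<in> carrier_vec n" for v using assms that by (simp add: psd_iff)
  show ?thesis
  proof (rule eq_matI)
    fix i j assume ij: "i < dim_row A" "j < dim_col A"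
    hence i: "i < n" and j: "j < n" using A by auto
    show "adj A $$ (i,j) = A $$ (i,j)"
    proof (cases "i = j")
      case True
      with psd_diag[OF assms i] show ?thesis using A i
        by (auto simp: less_eq_complex_def complex_eq_iff)
    next
      case False
      have ii: "Im (A$$(i,i)) = 0" "Im (A$$(j,j)) = 0"
        using psd_diag[OF assms i] psd_diag[OF assms j] by (auto simp: less_eq_complex_def)
      have 1: "0 \<le> qf A (vec2 n i j 1 1)" and 2: "0 \<le> qf A (vec2 n i j 1 \<i>)" using q by auto
      from 1 have "Im (A$$(i,j)) + Im (A$$(j,i)) = 0"
        using qf_vec2[OF A i j False, of 1 1] ii by (auto simp: less_eq_complex_def)
      moreover from 2 have "Re (A$$(i,j)) - Re (A$$(j,i)) = 0"
        using qf_vec2[OF A i j False, of 1 \<i>] ii by (auto simp: less_eq_complex_def algebra_simps)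
      ultimately show ?thesis using A i j by (auto simp: complex_eq_iff)
    qed
  qed (use A in auto)
qed

lemma psd_trace_zero: assumes "psd n A" "mtrace A = 0" shows "A = 0\<^sub>m n n"
proof -
  have A: "A \<in> carrier_mat n n" using assms by (simp add: psd_iff)
  have "(\<Sum>i<n. A$$(i,i)) = 0" using assms A by (simp add: mtrace_def)
  moreover have "\<forall>i\<in>{..<n}. 0 \<le> A$$(i,i)" using psd_diag[OF assms(1)] by auto
  moreover have "(\<Sum>i<n. A$$(i,i)) = 0 \<longleftrightarrow> (\<forall>i\<in>{..<n}. A$$(i,i) = 0)"
    by (rule sum_nonneg_eq_0_iff) (use psd_diag[OF assms(1)] in auto)
  ultimately have d: "\<forall>i\<in>{..<n}. A$$(i,i) = 0" by blast
  show ?thesis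
  proof (rule eq_matI)
    fix i j assume "i < dim_row (0\<^sub>m n n :: complex mat)" "j < dim_col (0\<^sub>m n n :: complex mat)"
    hence i: "i < n" and j: "j < n" by auto
    have "A $$ (i,i) = 0" using d i by auto
    from psd_zero_diag[OF assms(1) i this j] show "A $$ (i,j) = 0\<^sub>m n n $$ (i,j)" using i j by simp
  qed (use A in auto)
qed

definition E :: "nat \<Rightarrow> nat \<Rightarrow> nat \<Rightarrow> complex mat" where
  "E n i j = mat n n (\<lambda>(p,q). if p = i \<and> q = j then 1 else 0)"

lemma E_carrier[simp]: "E n i j \<in> carrier_mat n n" by (simp add: E_def)
lemma dim_E[simp]: "dim_row (E n i j) = n" "dim_col (E n i j) = n" by (auto simp: E_def)

lemma lin_repr:
  fixes f :: "complex mat \<Rightarrow> complex"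
  assumes add: "\<And>X Y. X \<in> carrier_mat d d \<Longrightarrow> Y \<in> carrier_mat d d \<Longrightarrow> f (X + Y) = f X + f Y"
    and sm: "\<And>X c. X \<in> carrier_mat d d \<Longrightarrow> f (c \<cdot>\<^sub>m X) = c * f X"
    and X: "X \<in> carrier_mat d d"
  shows "f X = (\<Sum>i<d. \<Sum>j<d. X $$ (i,j) * f (E d i j))"
proof -
  define R where "R S = mat d d (\<lambda>p. if p \<in> S then X $$ p else 0)" for S
  have main: "f (R S) = (\<Sum>p\<in>S. X $$ p * f (E d (fst p) (snd p)))" if "S \<subseteq> {..<d} \<times> {..<d}" for S
  proof -
    have "finite S" using that finite_subset by blast
    thus ?thesis using that
    proof (induction S rule: finite_induct)
      case empty
      have "R {} = 0 \<cdot>\<^sub>m (0\<^sub>m d d)" by (rule eq_matI) (auto simp: R_def)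
      hence "f (R {}) = 0" using sm[of "0\<^sub>m d d" 0] by simp
      thus ?case by simp
    next
      case (insert x S)
      have "R (insert x S) = R S + X $$ x \<cdot>\<^sub>m E d (fst x) (snd x)"
        using insert by (intro eq_matI) (auto simp: R_def E_def split: prod.splits)
      hence "f (R (insert x S)) = f (R S) + X $$ x * f (E d (fst x) (snd x))"
        using add sm by (simp add: R_def)
      thus ?case using insert by simp
    qed
  qed
  have "R ({..<d} \<times> {..<d}) = X" by (rule eq_matI) (use X in \<open>auto simp: R_def\<close>)
  with main[of "{..<d} \<times> {..<d}"] have "f X = (\<Sum>p\<in>{..<d} \<times> {..<d}. X $$ p * f (E d (fst p) (snd p)))"
    by simp
  also have "\<dots> = (\<Sum>i<d. \<Sum>j<d. X $$ (i,j) * f (E d i j))"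
    by (simp add: sum.cartesian_product split_def)
  finally show ?thesis .
qed

lemma mtrace_E: assumes "Z \<in> carrier_mat d d" "i < d" "j < d"
  shows "mtrace (E d i j * Z) = Z $$ (j,i)"
proof -
  have "mtrace (E d i j * Z) = (\<Sum>p<d. \<Sum>q<d. E d i j $$ (p,q) * Z$$(q,p))"
    using assms by (auto simp: mtrace_def scalar_prod_def atLeast0LessThan intro!: sum.cong)
  also have "\<dots> = (\<Sum>q<d. E d i j $$ (i,q) * Z$$(q,i))"
    by (rule sum_one) (use assms in \<open>auto simp: E_def\<close>)
  also have "\<dots> = E d i j $$ (i,j) * Z$$(j,i)"
    by (rule sum_one) (use assms in \<open>auto simp: E_def\<close>)
  finally show ?thesis using assms by (simp add: E_def)
qed

lemma dual_unique: assumes "Z \<in> carrier_mat d d" "Z' \<in> carrier_mat d d"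
  "\<forall>X\<in>carrier_mat d d. mtrace (X * Z) = mtrace (X * Z')"
  shows "Z = Z'"
proof (rule eq_matI)
  fix i j assume "i < dim_row Z'" "j < dim_col Z'"
  hence ij: "i < d" "j < d" using assms by auto
  have "mtrace (E d j i * Z) = mtrace (E d j i * Z')"
    using assms(3) E_carrier by blast
  thus "Z $$ (i,j) = Z' $$ (i,j)"
    using mtrace_E[OF assms(1) ij(2,1)] mtrace_E[OF assms(2) ij(2,1)] by simp
next
  show "dim_row Z = dim_row Z'" "dim_col Z = dim_col Z'" using assms(1,2) by auto
qed

lemma dual_char: assumes "Z \<in> carrier_mat d d" "\<forall>X\<in>carrier_mat d d. mtrace (L X * Y) = mtrace (X * Z)"
  shows "dual_map d L Y = Z"
  unfolding dual_map_def
proof (rule the_equality)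
  show "Z \<in> carrier_mat d d \<and> (\<forall>X\<in>carrier_mat d d. mtrace (L X * Y) = mtrace (X * Z))"
    using assms by blast
  fix Z' assume a: "Z' \<in> carrier_mat d d \<and> (\<forall>X\<in>carrier_mat d d. mtrace (L X * Y) = mtrace (X * Z'))"
  have "\<forall>X\<in>carrier_mat d d. mtrace (X * Z') = mtrace (X * Z)" using a assms(2) by metis
  thus "Z' = Z" using dual_unique[of Z' d Z] assms(1) a by blast
qed

lemma linear_mapD:
  assumes "Defs.linear_map d L"
  shows "\<And>X. X \<in> carrier_mat d d \<Longrightarrow> L X \<in> carrier_mat d d"
    "\<And>X Y. X \<in> carrier_mat d d \<Longrightarrow> Y \<in> carrier_mat d d \<Longrightarrow> L (X + Y) = L X + L Y"
    "\<And>X c. X \<in> carrier_mat d d \<Longrightarrow> L (c \<cdot>\<^sub>m X) = c \<cdot>\<^sub>m L X"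
  using assms by (auto simp: Defs.linear_map_def)

lemma dual_exists: assumes L: "Defs.linear_map d L" and Y: "Y \<in> carrier_mat d d"
  shows "dual_map d L Y \<in> carrier_mat d d \<and> (\<forall>X\<in>carrier_mat d d. mtrace (L X * Y) = mtrace (X * dual_map d L Y))"
proof -
  define Z where "Z = mat d d (\<lambda>(i,j). mtrace (L (E d j i) * Y))"
  have Z: "Z \<in> carrier_mat d d" by (simp add: Z_def)
  have eq: "mtrace (L X * Y) = mtrace (X * Z)" if X: "X \<in> carrier_mat d d" for X
  proof -
    have "mtrace (L X * Y) = (\<Sum>i<d. \<Sum>j<d. X $$ (i,j) * mtrace (L (E d i j) * Y))"
    proof (rule lin_repr[of d "\<lambda>X. mtrace (L X * Y)"])
      fix X1 X2 :: "complex mat" assume "X1 \<in> carrier_mat d d" "X2 \<in> carrier_mat d d"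
      hence c: "L X1 \<in> carrier_mat d d" "L X2 \<in> carrier_mat d d" "L (X1 + X2) = L X1 + L X2"
        using linear_mapD[OF L] by auto
      have "L (X1 + X2) * Y = L X1 * Y + L X2 * Y" using c Y by (simp add: add_mult_distrib_mat)
      moreover have "L X1 * Y \<in> carrier_mat d d" "L X2 * Y \<in> carrier_mat d d" using c Y by auto
      ultimately show "mtrace (L (X1 + X2) * Y) = mtrace (L X1 * Y) + mtrace (L X2 * Y)"
        by (simp add: mtrace_add)
    next
      fix X1 :: "complex mat" and c assume "X1 \<in> carrier_mat d d"
      hence c: "L X1 \<in> carrier_mat d d" "L (c \<cdot>\<^sub>m X1) = c \<cdot>\<^sub>m L X1" using linear_mapD[OF L] by auto
      hence "L (c \<cdot>\<^sub>m X1) * Y = c \<cdot>\<^sub>m (L X1 * Y)" using Y by (simp add: mult_smult_assoc_mat)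
      moreover have "L X1 * Y \<in> carrier_mat d d" using c Y by auto
      ultimately show "mtrace (L (c \<cdot>\<^sub>m X1) * Y) = c * mtrace (L X1 * Y)"
        by (simp add: mtrace_smult)
    qed (rule X)
    also have "\<dots> = (\<Sum>i<d. \<Sum>j<d. X $$ (i,j) * Z $$ (j,i))"
      by (intro sum.cong refl) (simp add: Z_def)
    also have "\<dots> = mtrace (X * Z)"
      using X Z by (auto simp: mtrace_def scalar_prod_def atLeast0LessThan intro!: sum.cong)
    finally show ?thesis .
  qed
  have "dual_map d L Y = Z" by (rule dual_char) (use Z eq in auto)
  thus ?thesis using Z eq by auto
qed

definition unitary :: "nat \<Rightarrow> complex mat \<Rightarrow> bool" where
  "unitary n U \<longleftrightarrow> U \<in> carrier_mat n n \<and> adj U * U = 1\<^sub>m n \<and> U * adj U = 1\<^sub>m n"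

definition dm :: "nat \<Rightarrow> (nat \<Rightarrow> complex) \<Rightarrow> complex mat" where
  "dm n f = mat n n (\<lambda>(i,j). if i = j then f i else 0)"

lemma dm_carrier[simp]: "dm n f \<in> carrier_mat n n" by (simp add: dm_def)
lemma dim_dm[simp]: "dim_row (dm n f) = n" "dim_col (dm n f) = n" by (auto simp: dm_def)
lemma dm_index[simp]: "i < n \<Longrightarrow> j < n \<Longrightarrow> dm n f $$ (i,j) = (if i = j then f i else 0)"
  by (simp add: dm_def)

lemma unitary_mult: assumes "unitary n U" "unitary n V" shows "unitary n (U * V)"
proof -
  have U: "U \<in> carrier_mat n n" and V: "V \<in> carrier_mat n n" using assms by (auto simp: unitary_def)
  have aU: "adj U \<in> carrier_mat n n" and aV: "adj V \<in> carrier_mat n n" using U V by auto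
  have "adj (U * V) * (U * V) = adj V * adj U * (U * V)" by (simp add: adj_mult[OF U V])
  also have "\<dots> = adj V * (adj U * (U * V))" by (rule assoc_mult_mat[OF aV aU mult_carrier_mat[OF U V]])
  also have "adj U * (U * V) = (adj U * U) * V" by (rule assoc_mult_mat[OF aU U V, symmetric])
  also have "adj U * U = 1\<^sub>m n" using assms by (simp add: unitary_def)
  also have "1\<^sub>m n * V = V" using V by simp
  also have "adj V * V = 1\<^sub>m n" using assms by (simp add: unitary_def)
  finally have 1: "adj (U * V) * (U * V) = 1\<^sub>m n" .
  have "(U * V) * adj (U * V) = U * V * (adj V * adj U)" by (simp add: adj_mult[OF U V])
  also have "\<dots> = U * (V * (adj V * adj U))" by (rule assoc_mult_mat[OF U V mult_carrier_mat[OF aV aU]])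
  also have "V * (adj V * adj U) = (V * adj V) * adj U" by (rule assoc_mult_mat[OF V aV aU, symmetric])
  also have "V * adj V = 1\<^sub>m n" using assms by (simp add: unitary_def)
  also have "1\<^sub>m n * adj U = adj U" by (rule left_mult_one_mat[OF aU])
  also have "U * adj U = 1\<^sub>m n" using assms by (simp add: unitary_def)
  finally show ?thesis using 1 U V by (simp add: unitary_def)
qed

lemma zcz: "(z::complex) * cnj z = complex_of_real ((cmod z)^2)"
  by (metis complex_norm_square of_real_power)

lemma unitaryI: assumes "U \<in> carrier_mat n n" "adj U * U = 1\<^sub>m n" shows "unitary n U"
  using assms mat_mult_left_right_inverse[of "adj U" n U] by (auto simp: unitary_def)

lemma adj_four_block: assumes "A \<in> carrier_mat n1 n1" "D \<in> carrier_mat n2 n2"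
  shows "adj (four_block_mat A (0\<^sub>m n1 n2) (0\<^sub>m n2 n1) D) = four_block_mat (adj A) (0\<^sub>m n1 n2) (0\<^sub>m n2 n1) (adj D)"
  by (rule eq_matI) (use assms in auto)

lemma mult_bd: assumes "A1 \<in> carrier_mat a a" "D1 \<in> carrier_mat b b" "A2 \<in> carrier_mat a a" "D2 \<in> carrier_mat b b"
  shows "four_block_mat A1 (0\<^sub>m a b) (0\<^sub>m b a) D1 * four_block_mat A2 (0\<^sub>m a b) (0\<^sub>m b a) D2
       = four_block_mat (A1 * A2) (0\<^sub>m a b) (0\<^sub>m b a) (D1 * D2)"
  by (subst mult_four_block_mat[OF assms(1) zero_carrier_mat zero_carrier_mat assms(2) assms(3) zero_carrier_mat zero_carrier_mat assms(4)])
     (use assms in simp)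

lemma unitary_conj: assumes "unitary n W" "A \<in> carrier_mat n n"
  shows "W * (adj W * A * W) * adj W = A"
proof -
  have W: "W \<in> carrier_mat n n" using assms by (simp add: unitary_def)
  note sq = assoc_mult_mat[of _ n n _ n _ n] mult_carrier_mat[of _ n n _ n] adj_carrier[of _ n n]
  have "W * (adj W * A * W) * adj W = (W * adj W) * A * (W * adj W)" using W assms(2) by (simp add: sq)
  also have "\<dots> = A" using assms by (simp add: unitary_def)
  finally show ?thesis .
qed

lemma spectral:
  assumes "A \<in> carrier_mat n n" "adj A = A"
  shows "\<exists>U f. unitary n U \<and> A = U * dm n f * adj U"
  using assms
proof (induction n arbitrary: A)
  case 0
  have "A = 1\<^sub>m 0 * dm 0 (\<lambda>_. 0) * adj (1\<^sub>m 0)" by (rule eq_matI) (use 0 in auto)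
  moreover have "unitary 0 (1\<^sub>m 0)" by (simp add: unitary_def)
  ultimately show ?case by blast
next
  case (Suc m A)
  define n where "n = Suc m"
  have A: "A \<in> carrier_mat n n" and hA: "adj A = A" using Suc n_def by auto
  have n0: "0 < n" by (simp add: n_def)
  from spectrum_non_empty[OF A n0] obtain e where "e \<in> spectrum A" by blast
  then obtain v where v: "v \<in> carrier_vec n" and v0: "v \<noteq> 0\<^sub>v n" and ev: "A *\<^sub>v v = e \<cdot>\<^sub>v v"
    unfolding spectrum_def eigenvalue_def eigenvector_def using A by auto
  interpret cof_vec_space n "TYPE(complex)" .
  define b where "b = basis_completion v"
  define ws where "ws = gram_schmidt n b"
  from basis_completion[OF v v0, folded b_def]
  have dist_b: "distinct b" and indep: "\<not> lin_dep (set b)" and b: "set b \<subseteq> carrier_vec n" and hdb: "hd b = v"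
    and len_b: "length b = n" by auto
  from hdb len_b n0 obtain vs where bv: "b = v # vs" by (cases b, auto)
  from gram_schmidt_result[OF b dist_b indep refl, folded ws_def]
  have ws: "set ws \<subseteq> carrier_vec n" "corthogonal ws" "length ws = n"
    by (auto simp: len_b)
  from gram_schmidt_hd[OF v, of vs, folded bv] have hdws: "hd ws = v" unfolding ws_def .
  have ws0: "ws ! 0 = v" using hdws ws(3) n0 by (cases ws) auto
  have wsc: "ws ! i \<in> carrier_vec n" if "i < n" for i using ws that by auto
  define nr where "nr i = sqrt (Re (ws ! i \<bullet>c ws ! i))" for i
  have wsn: "ws ! i \<bullet>c ws ! i = complex_of_real ((nr i)^2) \<and> nr i > 0" if i: "i < n" for i
  proof -
    have "ws ! i \<bullet>c ws ! i = (\<Sum>k<n. complex_of_real ((cmod (ws ! i $ k))^2))"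
      using wsc[OF i] by (auto simp: scalar_prod_def atLeast0LessThan zcz simp del: of_real_power intro!: sum.cong)
    also have "\<dots> = complex_of_real (\<Sum>k<n. (cmod (ws ! i $ k))^2)" by simp
    finally have eq: "ws ! i \<bullet>c ws ! i = complex_of_real (\<Sum>k<n. (cmod (ws ! i $ k))^2)" .
    have ne: "ws ! i \<bullet>c ws ! i \<noteq> 0" using corthogonalD[OF ws(2), of i i] ws(3) i by auto
    have pos: "(\<Sum>k<n. (cmod (ws ! i $ k))^2) > 0"
      using ne eq by (metis less_eq_real_def of_real_0 sum_nonneg zero_le_power2)
    show ?thesis unfolding nr_def eq using pos by simp
  qed
  define us where "us = map (\<lambda>i. complex_of_real (1 / nr i) \<cdot>\<^sub>v ws ! i) [0..<n]"
  have us_len: "length us = n" by (simp add: us_def)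
  have usc: "us ! i \<in> carrier_vec n" if "i < n" for i using that wsc by (simp add: us_def)
  have us_orth: "us ! j \<bullet>c us ! i = (if i = j then 1 else 0)" if "i < n" "j < n" for i j
  proof -
    have "us ! j \<bullet>c us ! i = complex_of_real (1 / nr j) * complex_of_real (1 / nr i) * (ws ! j \<bullet>c ws ! i)"
      using that wsc[of i] wsc[of j] by (simp add: us_def conjugate_smult_vec scalar_prod_smult_distrib smult_scalar_prod_distrib)
    also have "\<dots> = (if i = j then 1 else 0)"
    proof (cases "i = j")
      case True
      thus ?thesis using wsn[OF that(1)] by (simp add: field_simps power2_eq_square)
    next
      case False
      hence "ws ! j \<bullet>c ws ! i = 0" using corthogonalD[OF ws(2), of j i] ws(3) that by auto
      thus ?thesis using False by simp
    qed
    finally show ?thesis .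
  qed
  define W where "W = mat_of_cols n us"
  have W: "W \<in> carrier_mat n n" using mat_of_cols_carrier(1)[of n us] us_len by (simp add: W_def)
  have Wij: "W $$ (i,j) = us ! j $ i" if "i < n" "j < n" for i j
    using that us_len by (simp add: W_def mat_of_cols_index)
  have WW: "adj W * W = 1\<^sub>m n"
  proof (rule eq_matI)
    fix i j assume "i < dim_row (1\<^sub>m n :: complex mat)" "j < dim_col (1\<^sub>m n :: complex mat)"
    hence i: "i < n" and j: "j < n" by auto
    have "(adj W * W) $$ (i,j) = (\<Sum>k<n. cnj (W $$ (k,i)) * W $$ (k,j))"
      using W i j by (auto simp: scalar_prod_def atLeast0LessThan intro!: sum.cong)
    also have "\<dots> = us ! j \<bullet>c us ! i"
      using i j usc[OF i] usc[OF j] by (auto simp: Wij scalar_prod_def atLeast0LessThan mult.commute intro!: sum.cong)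
    also have "\<dots> = 1\<^sub>m n $$ (i,j)" using us_orth[OF i j] i j by simp
    finally show "(adj W * W) $$ (i,j) = 1\<^sub>m n $$ (i,j)" .
  qed (use W in auto)
  have uW: "unitary n W" using unitaryI[OF W WW] .
  hence WW': "W * adj W = 1\<^sub>m n" by (simp add: unitary_def)
  have colW0: "col W 0 = complex_of_real (1 / nr 0) \<cdot>\<^sub>v v"
  proof -
    have "col W 0 = us ! 0" unfolding W_def using n0 us_len usc[OF n0] by (subst col_mat_of_cols) auto
    also have "\<dots> = complex_of_real (1 / nr 0) \<cdot>\<^sub>v v" using n0 by (simp add: us_def ws0)
    finally show ?thesis .
  qed
  define A' where "A' = adj W * A * W"
  have A': "A' \<in> carrier_mat n n" using A W unfolding A'_def by (metis adj_carrier mult_carrier_mat)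
  have aWA: "adj W * A \<in> carrier_mat n n" using A W by (metis adj_carrier mult_carrier_mat)
  have "adj A' = adj W * adj (adj W * A)" unfolding A'_def by (rule adj_mult[OF aWA W])
  also have "adj (adj W * A) = adj A * W" using adj_mult[OF adj_carrier[OF W] A] by simp
  also have "adj W * (adj A * W) = A'" unfolding A'_def hA by (rule assoc_mult_mat[OF adj_carrier[OF W] A W, symmetric])
  finally have hA': "adj A' = A'" .
  have c1: "col A' 0 = (adj W * A) *\<^sub>v col W 0" unfolding A'_def by (rule col_mult2[OF aWA W n0])
  have cW0: "col W 0 \<in> carrier_vec n" using W by (intro carrier_vecI) simp
  have c2: "(adj W * A) *\<^sub>v col W 0 = adj W *\<^sub>v (A *\<^sub>v col W 0)"
    by (rule assoc_mult_mat_vec[OF adj_carrier[OF W] A cW0])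
  have c3: "A *\<^sub>v col W 0 = e \<cdot>\<^sub>v col W 0"
    unfolding colW0 using A v ev by (simp add: mult_mat_vec[OF A v] smult_smult_assoc mult.commute)
  have c4: "adj W *\<^sub>v (e \<cdot>\<^sub>v col W 0) = e \<cdot>\<^sub>v (adj W *\<^sub>v col W 0)"
    by (rule mult_mat_vec[OF adj_carrier[OF W] cW0])
  have c5: "adj W *\<^sub>v col W 0 = col (adj W * W) 0" by (rule col_mult2[OF adj_carrier[OF W] W n0, symmetric])
  have c6: "col (adj W * W) 0 = unit_vec n 0" using WW n0 by simp
  have colA': "col A' 0 = e \<cdot>\<^sub>v unit_vec n 0" unfolding c1 c2 c3 c4 c5 c6 ..
  have A'i0: "A' $$ (i,0) = (if i = 0 then e else 0)" if "i < n" for i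
  proof -
    have "A' $$ (i,0) = col A' 0 $ i" using A' that n0 by simp
    thus ?thesis using colA' that by simp
  qed
  have A'adj: "A' $$ (i,j) = cnj (A' $$ (j,i))" if "i < n" "j < n" for i j
  proof -
    have "A' $$ (i,j) = adj A' $$ (i,j)" using hA' by simp
    also have "\<dots> = cnj (A' $$ (j,i))" using A' that by simp
    finally show ?thesis .
  qed
  have ecnj: "cnj e = e" using A'adj[OF n0 n0] A'i0[OF n0] by simp
  have A'0j: "A' $$ (0,j) = (if j = 0 then e else 0)" if "j < n" for j
    using A'adj[OF n0 that] A'i0[OF that] ecnj by simp
  define A3 where "A3 = mat m m (\<lambda>(i,j). A' $$ (Suc i, Suc j))"
  have A3: "A3 \<in> carrier_mat m m" by (simp add: A3_def)
  have hA3: "adj A3 = A3"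
  proof (rule eq_matI)
    fix i j assume "i < dim_row A3" "j < dim_col A3"
    hence i: "i < m" and j: "j < m" by (auto simp: A3_def)
    have "adj A' $$ (Suc i, Suc j) = A' $$ (Suc i, Suc j)" using hA' by simp
    thus "adj A3 $$ (i,j) = A3 $$ (i,j)" using i j A' by (simp add: A3_def n_def)
  qed (auto simp: A3_def)
  from Suc.IH[OF A3 hA3] obtain V g where uV: "unitary m V" and A3eq: "A3 = V * dm m g * adj V" by blast
  have V: "V \<in> carrier_mat m m" using uV by (simp add: unitary_def)
  define V' where "V' = four_block_mat (1\<^sub>m 1) (0\<^sub>m 1 m) (0\<^sub>m m 1) V"
  have V': "V' \<in> carrier_mat n n" using four_block_carrier_mat[OF one_carrier_mat V, of 1] V by (simp add: V'_def n_def)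
  have adjV': "adj V' = four_block_mat (1\<^sub>m 1) (0\<^sub>m 1 m) (0\<^sub>m m 1) (adj V)"
    unfolding V'_def by (subst adj_four_block[OF _ V]) auto
  have "adj V' * V' = four_block_mat (1\<^sub>m 1) (0\<^sub>m 1 m) (0\<^sub>m m 1) (adj V * V)"
    unfolding adjV' unfolding V'_def using V by (subst mult_bd) auto
  also have "\<dots> = 1\<^sub>m n" using uV by (simp add: unitary_def n_def)
  finally have uV': "unitary n V'" using unitaryI[OF V'] by blast
  define f where "f i = (if i = 0 then e else g (i - 1))" for i
  have Deq: "four_block_mat (mat 1 1 (\<lambda>_. e)) (0\<^sub>m 1 m) (0\<^sub>m m 1) (dm m g) = dm n f"
    by (rule eq_matI) (auto simp: f_def n_def)
  have "V' * dm n f * adj V' = four_block_mat (mat 1 1 (\<lambda>_. e)) (0\<^sub>m 1 m) (0\<^sub>m m 1) (V * dm m g * adj V)"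
    unfolding Deq[symmetric] adjV' unfolding V'_def using V
    by (simp add: mult_bd)
  also have "\<dots> = A'"
  proof (rule eq_matI)
    fix i j assume "i < dim_row A'" "j < dim_col A'"
    hence i: "i < n" and j: "j < n" using A' by auto
    show "four_block_mat (mat 1 1 (\<lambda>_. e)) (0\<^sub>m 1 m) (0\<^sub>m m 1) (V * dm m g * adj V) $$ (i,j) = A' $$ (i,j)"
      using i j A'i0[OF i] A'0j[OF j] V unfolding A3eq[symmetric]
      by (cases i; cases j) (auto simp: A3_def n_def)
  qed (use A' V in \<open>auto simp: n_def\<close>)
  finally have A'eq: "V' * dm n f * adj V' = A'" .
  note sq = assoc_mult_mat[of _ n n _ n _ n] mult_carrier_mat[of _ n n _ n] adj_carrier[of _ n n]
  have "A = W * A' * adj W" using unitary_conj[OF uW A] by (simp add: A'_def)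
  also have "\<dots> = (W * V') * dm n f * adj (W * V')"
    unfolding A'eq[symmetric] using W V' by (simp add: adj_mult[OF W V'] sq)
  finally have "A = (W * V') * dm n f * adj (W * V')" .
  moreover have "unitary n (W * V')" using unitary_mult[OF uW uV'] .
  ultimately show ?case unfolding n_def by blast
qed

lemma mult_dm_right: assumes "X \<in> carrier_mat n n" "i < n" "j < n"
  shows "(X * dm n f) $$ (i,j) = X $$ (i,j) * f j"
proof -
  have "(X * dm n f) $$ (i,j) = (\<Sum>k<n. X $$ (i,k) * dm n f $$ (k,j))"
    using assms by (simp add: scalar_prod_def atLeast0LessThan)
  also have "\<dots> = X $$ (i,j) * dm n f $$ (j,j)" by (rule sum_one) (use assms in auto)
  finally show ?thesis using assms by simp
qed

lemma mult_dm_left: assumes "X \<in> carrier_mat n n" "i < n" "j < n"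
  shows "(dm n f * X) $$ (i,j) = f i * X $$ (i,j)"
proof -
  have "(dm n f * X) $$ (i,j) = (\<Sum>k<n. dm n f $$ (i,k) * X $$ (k,j))"
    using assms by (simp add: scalar_prod_def atLeast0LessThan)
  also have "\<dots> = dm n f $$ (i,i) * X $$ (i,j)" by (rule sum_one) (use assms in auto)
  finally show ?thesis using assms by simp
qed

lemma dm_mult: "dm n f * dm n g = dm n (\<lambda>i. f i * g i)"
proof (rule eq_matI)
  fix i j assume "i < dim_row (dm n (\<lambda>i. f i * g i))" "j < dim_col (dm n (\<lambda>i. f i * g i))"
  hence ij: "i < n" "j < n" by auto
  show "(dm n f * dm n g) $$ (i,j) = dm n (\<lambda>i. f i * g i) $$ (i,j)"
    using mult_dm_left[OF dm_carrier ij, of f g] ij by simp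
qed auto

lemma dm_add: "dm n f + dm n g = dm n (\<lambda>i. f i + g i)"
  by (rule eq_matI) auto

lemma adj_dm: "adj (dm n f) = dm n (\<lambda>i. cnj (f i))"
  by (rule eq_matI) auto

lemma dm_one: "dm n (\<lambda>_. 1) = 1\<^sub>m n"
  by (rule eq_matI) auto

lemma dm_zero: "dm n (\<lambda>_. 0) = 0\<^sub>m n n"
  by (rule eq_matI) auto

definition fc :: "complex mat \<Rightarrow> nat \<Rightarrow> (nat \<Rightarrow> complex) \<Rightarrow> complex mat" where
  "fc U n f = U * dm n f * adj U"

lemma fc_carrier: "unitary n U \<Longrightarrow> fc U n f \<in> carrier_mat n n"
  unfolding fc_def unitary_def by (metis adj_carrier dm_carrier mult_carrier_mat)

lemma unitary_carrier: "unitary n U \<Longrightarrow> U \<in> carrier_mat n n"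
  by (simp add: unitary_def)

lemma fc_mult: assumes "unitary n U" shows "fc U n f * fc U n g = fc U n (\<lambda>i. f i * g i)"
proof -
  have U: "U \<in> carrier_mat n n" using assms by (simp add: unitary_def)
  note sq = assoc_mult_mat[of _ n n _ n _ n] mult_carrier_mat[of _ n n _ n] adj_carrier[of _ n n]
  have "fc U n f * fc U n g = U * (dm n f * ((adj U * U) * (dm n g * adj U)))"
    using U by (simp add: fc_def sq)
  also have "adj U * U = 1\<^sub>m n" using assms by (simp add: unitary_def)
  also have "1\<^sub>m n * (dm n g * adj U) = dm n g * adj U" using U by (simp add: sq)
  also have "U * (dm n f * (dm n g * adj U)) = fc U n (\<lambda>i. f i * g i)"
    using U by (simp add: fc_def sq dm_mult[symmetric])
  finally show ?thesis .
qed

lemma fc_add: assumes "unitary n U" shows "fc U n f + fc U n g = fc U n (\<lambda>i. f i + g i)"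
proof -
  have U: "U \<in> carrier_mat n n" using assms by (simp add: unitary_def)
  have "fc U n f + fc U n g = U * dm n f * adj U + U * dm n g * adj U" by (simp add: fc_def)
  also have "\<dots> = (U * dm n f + U * dm n g) * adj U"
    by (rule add_mult_distrib_mat[symmetric]) (use U in auto)
  also have "U * dm n f + U * dm n g = U * (dm n f + dm n g)"
    by (rule mult_add_distrib_mat[symmetric]) (use U in auto)
  finally show ?thesis by (simp add: fc_def dm_add)
qed

lemma adj_fc: assumes "unitary n U" shows "adj (fc U n f) = fc U n (\<lambda>i. cnj (f i))"
proof -
  have U: "U \<in> carrier_mat n n" using assms by (simp add: unitary_def)
  note sq = assoc_mult_mat[of _ n n _ n _ n] mult_carrier_mat[of _ n n _ n] adj_carrier[of _ n n]
  have "adj (fc U n f) = adj (adj U) * adj (U * dm n f)"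
    unfolding fc_def by (rule adj_mult) (use U in \<open>auto simp: sq\<close>)
  also have "adj (U * dm n f) = adj (dm n f) * adj U" by (rule adj_mult) (use U in auto)
  finally show ?thesis using U by (simp add: fc_def adj_dm sq)
qed

lemma fc_one: assumes "unitary n U" shows "fc U n (\<lambda>_. 1) = 1\<^sub>m n"
proof -
  have U: "U \<in> carrier_mat n n" using assms by (simp add: unitary_def)
  have "fc U n (\<lambda>_. 1) = U * 1\<^sub>m n * adj U" by (simp add: fc_def dm_one)
  also have "U * 1\<^sub>m n = U" by (rule right_mult_one_mat[OF U])
  finally show ?thesis using assms by (simp add: unitary_def)
qed

lemma fc_cong: assumes "\<And>i. i < n \<Longrightarrow> f i = g i" shows "fc U n f = fc U n g"
proof -
  have "dm n f = dm n g" by (rule eq_matI) (use assms in auto)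
  thus ?thesis by (simp add: fc_def)
qed

lemma ofreal_nonneg: "0 \<le> r \<Longrightarrow> 0 \<le> complex_of_real r"
  by (simp add: less_eq_complex_def)

lemma zcz_nonneg: "0 \<le> (z::complex) * cnj z"
  by (subst zcz) (rule ofreal_nonneg, simp)

lemma psd_dm: assumes "\<And>i. i < n \<Longrightarrow> 0 \<le> f i" shows "psd n (dm n f)"
  unfolding psd_iff
proof (intro conjI ballI)
  fix v :: "complex vec" assume v: "v \<in> carrier_vec n"
  have "qf (dm n f) v = (\<Sum>k<n. \<Sum>l<n. cnj (v$k) * dm n f $$ (k,l) * v$l)" using v by (simp add: qf_def)
  also have "\<dots> = (\<Sum>k<n. cnj (v$k) * dm n f $$ (k,k) * v$k)"
    by (rule sum.cong[OF refl], rule sum_one) auto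
  also have "\<dots> = (\<Sum>k<n. f k * (v$k * cnj (v$k)))"
    by (rule sum.cong) (auto simp: mult_ac)
  finally have eq: "qf (dm n f) v = (\<Sum>k<n. f k * (v$k * cnj (v$k)))" .
  have "0 \<le> f k * (v$k * cnj (v$k))" if "k < n" for k
    using assms[OF that] zcz_nonneg[of "v$k"] by (rule mult_nonneg_nonneg)
  thus "0 \<le> qf (dm n f) v" unfolding eq by (intro sum_nonneg) auto
qed simp

lemma psd_fc: assumes "unitary n U" "\<And>i. i < n \<Longrightarrow> 0 \<le> f i" shows "psd n (fc U n f)"
proof -
  have U: "U \<in> carrier_mat n n" using assms by (simp add: unitary_def)
  have "psd n (adj (adj U) * dm n f * adj U)"
    by (rule psd_congr[OF psd_dm]) (use assms U in auto)
  thus ?thesis by (simp add: fc_def)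
qed

lemma adj_self_col_zero: assumes "M \<in> carrier_mat n m" "j < m" "(adj M * M) $$ (j,j) = 0" "k < n"
  shows "M $$ (k,j) = 0"
proof -
  have "(adj M * M) $$ (j,j) = (\<Sum>k<n. cnj (M $$ (k,j)) * M $$ (k,j))"
    using assms by (simp add: scalar_prod_def atLeast0LessThan)
  also have "\<dots> = (\<Sum>k<n. complex_of_real ((cmod (M $$ (k,j)))^2))"
    by (intro sum.cong refl) (metis zcz mult.commute)
  also have "\<dots> = complex_of_real (\<Sum>k<n. (cmod (M $$ (k,j)))^2)"
    by (rule of_real_sum[symmetric])
  finally have "complex_of_real (\<Sum>k<n. (cmod (M $$ (k,j)))^2) = 0" using assms(3) by simp
  hence "(\<Sum>k<n. (cmod (M $$ (k,j)))^2) = 0" by (simp only: of_real_eq_0_iff)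
  hence "\<forall>k\<in>{..<n}. (cmod (M $$ (k,j)))^2 = 0" by (subst (asm) sum_nonneg_eq_0_iff) auto
  thus ?thesis using assms(4) by simp
qed

lemma mtrace_psd_nonneg: "psd n A \<Longrightarrow> 0 \<le> mtrace A"
  unfolding mtrace_def using psd_diag[of n A] by (intro sum_nonneg) (auto simp: psd_iff)

lemma psd_sum_zero: assumes "psd n P1" "psd n P2" "P1 + P2 = 0\<^sub>m n n" shows "P2 = 0\<^sub>m n n"
proof -
  have "mtrace P1 + mtrace P2 = mtrace (0\<^sub>m n n)"
    using assms mtrace_add[of P1 n P2] by (simp add: psd_iff)
  also have "\<dots> = 0" by (simp add: mtrace_def)
  finally have "mtrace P2 = 0"
    using mtrace_psd_nonneg[OF assms(1)] mtrace_psd_nonneg[OF assms(2)] by (simp add: add_nonneg_eq_0_iff)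
  thus ?thesis using psd_trace_zero[OF assms(2)] by simp
qed

lemma unitary_conj2: assumes "unitary n W" "D \<in> carrier_mat n n"
  shows "adj W * (W * D * adj W) * W = D"
proof -
  have W: "W \<in> carrier_mat n n" using assms by (simp add: unitary_def)
  note sq = assoc_mult_mat[of _ n n _ n _ n] mult_carrier_mat[of _ n n _ n] adj_carrier[of _ n n]
  have "adj W * (W * D * adj W) * W = (adj W * W) * D * (adj W * W)" using W assms(2) by (simp add: sq)
  also have "\<dots> = D" using assms by (simp add: unitary_def)
  finally show ?thesis .
qed

lemma psd_spectral: assumes "psd n A"
  shows "\<exists>U dv. unitary n U \<and> A = fc U n dv \<and> (\<forall>i<n. 0 \<le> dv i)"
proof -
  have A: "A \<in> carrier_mat n n" using assms by (simp add: psd_iff)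
  obtain U dv where U: "unitary n U" and Aeq: "A = U * dm n dv * adj U"
    using spectral[OF A psd_hermitian[OF assms]] by blast
  have Uc: "U \<in> carrier_mat n n" using U by (simp add: unitary_def)
  have "adj U * A * U = dm n dv" unfolding Aeq by (rule unitary_conj2[OF U dm_carrier])
  moreover have "psd n (adj U * A * U)" by (rule psd_congr[OF assms Uc])
  ultimately have "psd n (dm n dv)" by simp
  hence "0 \<le> dv i" if "i < n" for i using psd_diag[of n "dm n dv" i] that by simp
  thus ?thesis using U Aeq by (auto simp: fc_def)
qed

definition sqf :: "(nat \<Rightarrow> complex) \<Rightarrow> nat \<Rightarrow> complex" where
  "sqf dv i = complex_of_real (sqrt (Re (dv i)))"

lemma nonneg_real: "0 \<le> (z::complex) \<Longrightarrow> z = complex_of_real (Re z) \<and> 0 \<le> Re z"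
  by (auto simp: less_eq_complex_def complex_eq_iff)

lemma sqf_sq: assumes "0 \<le> dv i" shows "sqf dv i * sqf dv i = dv i"
proof -
  have h: "dv i = complex_of_real (Re (dv i))" "0 \<le> Re (dv i)" using nonneg_real[OF assms] by auto
  have "sqf dv i * sqf dv i = complex_of_real (sqrt (Re (dv i)) * sqrt (Re (dv i)))"
    unfolding sqf_def of_real_mult ..
  also have "sqrt (Re (dv i)) * sqrt (Re (dv i)) = Re (dv i)" using h(2) by simp
  finally show ?thesis using h(1) by simp
qed

lemma sqf_nonneg: "0 \<le> dv i \<Longrightarrow> 0 \<le> sqf dv i" by (simp add: sqf_def less_eq_complex_def)

lemma sqf_cnj: "cnj (sqf dv i) = sqf dv i" by (simp add: sqf_def)

lemma sqf_zero: "0 \<le> dv i \<Longrightarrow> sqf dv i = 0 \<longleftrightarrow> dv i = 0"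
  using nonneg_real[of "dv i"] unfolding sqf_def by (metis of_real_0 of_real_eq_0_iff real_sqrt_eq_zero_cancel_iff)

lemma cancel_mat: assumes "X \<in> carrier_mat n n" "(Y::complex mat) \<in> carrier_mat n n"
  shows "X - Y + (Y - X) = 0\<^sub>m n n"
  by (rule eq_matI) (use assms in auto)

lemma sqrt_unique:
  assumes U: "unitary n U" and dv: "\<And>i. i < n \<Longrightarrow> 0 \<le> dv i" and B: "psd n B"
    and BB: "B * B = fc U n dv"
  shows "B = fc U n (sqf dv)"
proof -
  note sq = assoc_mult_mat[of _ n n _ n _ n] mult_carrier_mat[of _ n n _ n] adj_carrier[of _ n n]
  have Uc: "U \<in> carrier_mat n n" using U by (simp add: unitary_def)
  have Bc: "B \<in> carrier_mat n n" using B by (simp add: psd_iff)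
  define D where "D = dm n dv"
  define S where "S = dm n (sqf dv)"
  define W where "W = adj U * B * U"
  have Wc: "W \<in> carrier_mat n n" using Uc Bc by (simp add: W_def sq)
  have Dc: "D \<in> carrier_mat n n" and Sc: "S \<in> carrier_mat n n" by (auto simp: D_def S_def)
  have psdW: "psd n W" unfolding W_def by (rule psd_congr[OF B Uc])
  have hW: "adj W = W" by (rule psd_hermitian[OF psdW])
  have "W * W = adj U * (B * ((U * adj U) * (B * U)))" using Uc Bc by (simp add: W_def sq)
  also have "U * adj U = 1\<^sub>m n" using U by (simp add: unitary_def)
  also have "1\<^sub>m n * (B * U) = B * U" using Uc Bc by (simp add: sq)
  also have "adj U * (B * (B * U)) = adj U * (B * B) * U" using Uc Bc by (simp add: sq)
  also have "\<dots> = D" unfolding BB fc_def D_def by (rule unitary_conj2[OF U dm_carrier])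
  finally have WW: "W * W = D" .
  have "W * D = D * W" unfolding WW[symmetric] using Wc by (simp add: sq)
  hence comm: "W $$ (i,j) = 0 \<or> dv i = dv j" if "i < n" "j < n" for i j
    using mult_dm_right[OF Wc that, of dv] mult_dm_left[OF Wc that, of dv] by (auto simp: D_def)
  have WS: "W * S = S * W"
  proof (rule eq_matI)
    fix i j assume "i < dim_row (S * W)" "j < dim_col (S * W)"
    hence ij: "i < n" "j < n" using Wc Sc by auto
    have "W $$ (i,j) * sqf dv j = sqf dv i * W $$ (i,j)"
    proof (cases "W $$ (i,j) = 0")
      case False
      hence "dv i = dv j" using comm[OF ij] by simp
      thus ?thesis by (simp add: sqf_def mult.commute)
    qed simp
    thus "(W * S) $$ (i,j) = (S * W) $$ (i,j)"
      using mult_dm_right[OF Wc ij] mult_dm_left[OF Wc ij] by (simp add: S_def)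
  qed (use Wc Sc in auto)
  have SS: "S * S = D"
  proof -
    have "S * S = dm n (\<lambda>i. sqf dv i * sqf dv i)" by (simp add: S_def dm_mult)
    also have "\<dots> = D" unfolding D_def by (rule eq_matI) (auto simp: sqf_sq dv)
    finally show ?thesis .
  qed
  define Z where "Z = W - S"
  have Zc: "Z \<in> carrier_mat n n" using minus_carrier_mat[OF Sc] by (simp add: Z_def)
  have hS: "adj S = S" by (simp add: S_def adj_dm sqf_cnj)
  have hZ: "adj Z = Z" unfolding Z_def using Wc Sc by (simp add: adj_minus hW hS)
  have "Z * (W + S) = Z * W + Z * S" by (rule mult_add_distrib_mat[OF Zc Wc Sc])
  also have "Z * W = W * W - S * W" unfolding Z_def by (rule minus_mult_distrib_mat[OF Wc Sc Wc])
  also have "Z * S = W * S - S * S" unfolding Z_def by (rule minus_mult_distrib_mat[OF Wc Sc Sc])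
  also have "(W * W - S * W) + (W * S - S * S) = 0\<^sub>m n n"
  proof -
    have SWc: "S * W \<in> carrier_mat n n" using Sc Wc by (simp add: sq)
    show ?thesis unfolding WW SS WS by (rule cancel_mat[OF Dc SWc])
  qed
  finally have Z0: "Z * (W + S) = 0\<^sub>m n n" .
  have "Z * W * Z + Z * S * Z = (Z * W + Z * S) * Z"
  proof -
    have ZWc: "Z * W \<in> carrier_mat n n" using Zc Wc by (rule mult_carrier_mat)
    have ZSc: "Z * S \<in> carrier_mat n n" using Zc Sc by (rule mult_carrier_mat)
    show ?thesis by (rule add_mult_distrib_mat[OF ZWc ZSc Zc, symmetric])
  qed
  also have "Z * W + Z * S = Z * (W + S)" by (rule mult_add_distrib_mat[OF Zc Wc Sc, symmetric])
  also have "\<dots> * Z = 0\<^sub>m n n" unfolding Z0 by (rule left_mult_zero_mat[OF Zc])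
  finally have sum0: "Z * W * Z + Z * S * Z = 0\<^sub>m n n" .
  have p1: "psd n (Z * W * Z)" using psd_congr[OF psdW Zc] hZ by simp
  have "psd n S" unfolding S_def by (rule psd_dm) (simp add: sqf_nonneg dv)
  hence p2: "psd n (Z * S * Z)" using psd_congr[OF _ Zc, of S] hZ by simp
  have ZSZ: "Z * S * Z = 0\<^sub>m n n" by (rule psd_sum_zero[OF p1 p2 sum0])
  have Re_nn: "\<And>j. j < n \<Longrightarrow> 0 \<le> Re (dv j)" using nonneg_real dv by blast
  define r where "r i = complex_of_real (sqrt (sqrt (Re (dv i))))" for i
  define T where "T = dm n r"
  have Tc: "T \<in> carrier_mat n n" by (simp add: T_def)
  have TT: "T * T = S"
  proof -
    have "T * T = dm n (\<lambda>i. r i * r i)" by (simp add: T_def dm_mult)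
    also have "\<dots> = S" unfolding S_def
      by (rule eq_matI) (auto simp: r_def sqf_def Re_nn simp flip: of_real_mult)
    finally show ?thesis .
  qed
  have hT: "adj T = T" by (rule eq_matI) (simp_all add: T_def r_def)
  have TZc: "T * Z \<in> carrier_mat n n" using Tc Zc by (simp add: sq)
  have TTc: "T * T \<in> carrier_mat n n" using Tc Tc by (rule mult_carrier_mat)
  have "adj (T * Z) * (T * Z) = (Z * T) * (T * Z)" using adj_mult[OF Tc Zc] hT hZ by simp
  also have "\<dots> = Z * (T * (T * Z))" by (rule assoc_mult_mat[OF Zc Tc TZc])
  also have "T * (T * Z) = (T * T) * Z" by (rule assoc_mult_mat[OF Tc Tc Zc, symmetric])
  also have "Z * ((T * T) * Z) = Z * (T * T) * Z" by (rule assoc_mult_mat[OF Zc TTc Zc, symmetric])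
  also have "\<dots> = 0\<^sub>m n n" using ZSZ by (simp add: TT)
  finally have TZ0: "adj (T * Z) * (T * Z) = 0\<^sub>m n n" .
  have TZij: "r i * Z $$ (i,j) = 0" if "i < n" "j < n" for i j
  proof -
    have "(T * Z) $$ (i,j) = 0" by (rule adj_self_col_zero[OF TZc that(2) _ that(1)]) (use TZ0 that in simp)
    thus ?thesis using mult_dm_left[OF Zc that, of r] by (simp add: T_def)
  qed
  have Zz: "Z $$ (i,j) = 0" if ij: "i < n" "j < n" for i j
  proof (cases "dv i = 0")
    case False
    have "Re (dv i) > 0" using nonneg_real[OF dv[OF ij(1)]] False
      by (cases "Re (dv i) = 0") auto
    hence "r i \<noteq> 0" by (simp add: r_def)
    thus ?thesis using TZij[OF ij] by simp
  next
    case True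
    have "(adj W * W) $$ (i,i) = 0" using WW hW True ij by (simp add: D_def)
    hence "W $$ (j,i) = 0" by (rule adj_self_col_zero[OF Wc ij(1) _ ij(2)])
    moreover have "sqf dv i = 0" using True sqf_zero dv ij by blast
    ultimately have "Z $$ (j,i) = 0" using ij Wc by (simp add: Z_def S_def)
    moreover have "Z $$ (i,j) = cnj (Z $$ (j,i))"
      using hZ Zc ij by (metis adj_index carrier_matD(1) carrier_matD(2))
    ultimately show ?thesis by simp
  qed
  have WeqS: "W = S"
  proof (rule eq_matI)
    fix i j assume "i < dim_row S" "j < dim_col S"
    hence ij: "i < n" "j < n" using Sc by auto
    show "W $$ (i,j) = S $$ (i,j)" using Zz[OF ij] ij Wc Sc by (simp add: Z_def)
  qed (use Wc Sc in auto)
  have "B = U * W * adj U" using unitary_conj[OF U Bc] by (simp add: W_def)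
  also have "\<dots> = fc U n (sqf dv)" by (simp add: WeqS S_def fc_def)
  finally show ?thesis .
qed

lemma psd_sqrt_fc: assumes U: "unitary n U" and dv: "\<And>i. i < n \<Longrightarrow> 0 \<le> dv i"
  shows "psd_sqrt n (fc U n dv) = fc U n (sqf dv)"
  unfolding psd_sqrt_def
proof (rule the_equality)
  show "psd n (fc U n (sqf dv)) \<and> fc U n (sqf dv) * fc U n (sqf dv) = fc U n dv"
  proof
    show "psd n (fc U n (sqf dv))" by (rule psd_fc[OF U]) (simp add: sqf_nonneg dv)
    show "fc U n (sqf dv) * fc U n (sqf dv) = fc U n dv"
      unfolding fc_mult[OF U] by (rule fc_cong) (simp add: sqf_sq dv)
  qed
  fix B assume "psd n B \<and> B * B = fc U n dv"
  thus "B = fc U n (sqf dv)" using sqrt_unique[OF U, of dv B] dv by blast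
qed

lemma amp_carrier[simp]: "ampliation d k L M \<in> carrier_mat (k*d) (k*d)"
  by (simp add: ampliation_def)

lemma dim_amp[simp]: "dim_row (ampliation d k L M) = k*d" "dim_col (ampliation d k L M) = k*d"
  by (auto simp: ampliation_def)

lemma amp_index: "r < k*d \<Longrightarrow> s < k*d \<Longrightarrow>
  ampliation d k L M $$ (r,s) = L (block d M (r div d) (s div d)) $$ (r mod d, s mod d)"
  by (simp add: ampliation_def)

lemma block_carrier[simp]: "block d M a b \<in> carrier_mat d d"
  by (simp add: block_def)

lemma dim_block[simp]: "dim_row (block d M a b) = d" "dim_col (block d M a b) = d"
  by (auto simp: block_def)

lemma block_index[simp]: "i < d \<Longrightarrow> j < d \<Longrightarrow> block d M a b $$ (i,j) = M $$ (a*d+i, b*d+j)"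
  by (simp add: block_def)

lemma divmod_lt: assumes "r < k * (d::nat)" shows "r div d < k" "r mod d < d" "0 < d"
proof -
  show d0: "0 < d" using assms by (cases d) auto
  show "r mod d < d" using d0 by simp
  show "r div d < k" using assms by (metis div_less_iff_less_mult d0 mult.commute)
qed

lemma idx_lt: assumes "a < k" "i < (d::nat)" shows "a * d + i < k * d"
proof -
  have "a * d + i < a * d + d" using assms by simp
  also have "\<dots> = Suc a * d" by simp
  also have "\<dots> \<le> k * d" using assms(1) by (intro mult_right_mono) auto
  finally show ?thesis .
qed

lemma idx_div: "i < (d::nat) \<Longrightarrow> (a * d + i) div d = a" by simp
lemma idx_mod: "i < (d::nat) \<Longrightarrow> (a * d + i) mod d = i" by simp

lemma amp_index_block: assumes "a < k" "b < k" "i < d" "j < d"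
  shows "ampliation d k L M $$ (a*d+i, b*d+j) = L (block d M a b) $$ (i,j)"
  using assms idx_lt[OF assms(1,3)] idx_lt[OF assms(2,4)] by (simp add: amp_index)

lemma amp1: assumes "M \<in> carrier_mat d d" "L M \<in> carrier_mat d d"
  shows "ampliation d 1 L M = L M"
proof -
  have b: "block d M 0 0 = M" by (rule eq_matI) (use assms in auto)
  show ?thesis
  proof (rule eq_matI)
    fix i j assume "i < dim_row (L M)" "j < dim_col (L M)"
    hence ij: "i < d" "j < d" using assms by auto
    show "ampliation d 1 L M $$ (i,j) = L M $$ (i,j)" using ij b by (simp add: amp_index)
  qed (use assms in auto)
qed

lemma block_amp: assumes "a < k" "b < k" "L (block d M a b) \<in> carrier_mat d d"
  shows "block d (ampliation d k L M) a b = L (block d M a b)"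
  by (rule eq_matI) (use assms in \<open>auto simp: amp_index_block\<close>)

lemma amp_add: assumes "\<And>X. X \<in> carrier_mat d d \<Longrightarrow> L1 X \<in> carrier_mat d d"
  "\<And>X. X \<in> carrier_mat d d \<Longrightarrow> L2 X \<in> carrier_mat d d"
  shows "ampliation d k (\<lambda>X. L1 X + L2 X) M = ampliation d k L1 M + ampliation d k L2 M"
proof (rule eq_matI)
  fix r s assume "r < dim_row (ampliation d k L1 M + ampliation d k L2 M)"
    "s < dim_col (ampliation d k L1 M + ampliation d k L2 M)"
  hence rs: "r < k*d" "s < k*d" by auto
  have c: "L2 (block d M (r div d) (s div d)) \<in> carrier_mat d d" using assms(2) by simp
  show "ampliation d k (\<lambda>X. L1 X + L2 X) M $$ (r,s) = (ampliation d k L1 M + ampliation d k L2 M) $$ (r,s)"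
    using rs c divmod_lt[OF rs(1)] divmod_lt[OF rs(2)] by (simp add: amp_index)
qed auto

lemma amp_comp: assumes "\<And>X. X \<in> carrier_mat d d \<Longrightarrow> L2 X \<in> carrier_mat d d"
  shows "ampliation d k (\<lambda>X. L1 (L2 X)) M = ampliation d k L1 (ampliation d k L2 M)"
proof (rule eq_matI)
  fix r s assume "r < dim_row (ampliation d k L1 (ampliation d k L2 M))"
    "s < dim_col (ampliation d k L1 (ampliation d k L2 M))"
  hence rs: "r < k*d" "s < k*d" by auto
  have "block d (ampliation d k L2 M) (r div d) (s div d) = L2 (block d M (r div d) (s div d))"
    by (rule block_amp) (use divmod_lt[OF rs(1)] divmod_lt[OF rs(2)] assms in auto)
  thus "ampliation d k (\<lambda>X. L1 (L2 X)) M $$ (r,s) = ampliation d k L1 (ampliation d k L2 M) $$ (r,s)"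
    using rs by (simp add: amp_index)
qed auto

lemma sum_block: assumes "a < k"
  shows "(\<Sum>p<k*d. if p div d = a then g p else 0) = (\<Sum>p<(d::nat). g (a*d+p))"
proof -
  have "(\<Sum>p<k*d. if p div d = a then g p else 0) = (\<Sum>p\<in>{p\<in>{..<k*d}. p div d = a}. g p)"
    by (rule sum.inter_filter[symmetric]) simp
  also have "{p\<in>{..<k*d}. p div d = a} = (\<lambda>p. a*d+p) ` {..<d}"
  proof
    show "{p\<in>{..<k*d}. p div d = a} \<subseteq> (\<lambda>p. a*d+p) ` {..<d}"
    proof
      fix p assume "p \<in> {p\<in>{..<k*d}. p div d = a}"
      hence p: "p < k*d" "p div d = a" by auto
      have "p = a*d + p mod d" using p(2) by (metis div_mult_mod_eq)
      moreover have "p mod d < d" using divmod_lt[OF p(1)] by simp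
      ultimately show "p \<in> (\<lambda>p. a*d+p) ` {..<d}" by blast
    qed
    show "(\<lambda>p. a*d+p) ` {..<d} \<subseteq> {p\<in>{..<k*d}. p div d = a}"
    proof
      fix p assume "p \<in> (\<lambda>p. a*d+p) ` {..<d}"
      then obtain q where q: "q < d" "p = a*d+q" by auto
      thus "p \<in> {p\<in>{..<k*d}. p div d = a}" using idx_lt[OF assms q(1)] by simp
    qed
  qed
  also have "(\<Sum>p\<in>(\<lambda>p. a*d+p) ` {..<d}. g p) = (\<Sum>p<d. g (a*d+p))"
    by (subst sum.reindex) (auto simp: inj_on_def)
  finally show ?thesis .
qed

definition bd :: "nat \<Rightarrow> nat \<Rightarrow> complex mat \<Rightarrow> complex mat" where
  "bd d k K = mat (k*d) (k*d) (\<lambda>(r,s). if r div d = s div d then K $$ (r mod d, s mod d) else 0)"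

lemma bd_carrier[simp]: "bd d k K \<in> carrier_mat (k*d) (k*d)" by (simp add: bd_def)
lemma dim_bd[simp]: "dim_row (bd d k K) = k*d" "dim_col (bd d k K) = k*d" by (auto simp: bd_def)
lemma bd_index: "r < k*d \<Longrightarrow> s < k*d \<Longrightarrow> bd d k K $$ (r,s) = (if r div d = s div d then K $$ (r mod d, s mod d) else 0)"
  by (simp add: bd_def)

lemma amp_congr: assumes K: "K \<in> carrier_mat d d" and M: "M \<in> carrier_mat (k*d) (k*d)"
  shows "ampliation d k (\<lambda>X. adj K * X * K) M = adj (bd d k K) * M * bd d k K"
proof (rule eq_matI)
  let ?B = "bd d k K"
  fix r s assume "r < dim_row (adj ?B * M * ?B)" "s < dim_col (adj ?B * M * ?B)"
  hence rs: "r < k*d" "s < k*d" by (auto simp: bd_def)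
  define a where "a = r div d"
  define i where "i = r mod d"
  define b where "b = s div d"
  define j where "j = s mod d"
  have a: "a < k" "i < d" using divmod_lt[OF rs(1)] by (auto simp: a_def i_def)
  have b: "b < k" "j < d" using divmod_lt[OF rs(2)] by (auto simp: b_def j_def)
  have "ampliation d k (\<lambda>X. adj K * X * K) M $$ (r,s) = (adj K * block d M a b * K) $$ (i,j)"
    using rs by (simp add: amp_index a_def b_def i_def j_def)
  also have "\<dots> = (\<Sum>q<d. (\<Sum>p<d. cnj (K $$ (p,i)) * M $$ (a*d+p, b*d+q)) * K $$ (q,j))"
    using K a b by (simp add: scalar_prod_def atLeast0LessThan)
  also have "\<dots> = (adj ?B * M * ?B) $$ (r,s)"
  proof -
    have inner: "(adj ?B * M) $$ (r,q') = (\<Sum>p<d. cnj (K $$ (p,i)) * M $$ (a*d+p, q'))" if q': "q' < k*d" for q'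
    proof -
      have "(adj ?B * M) $$ (r,q') = (\<Sum>p'<k*d. cnj (?B $$ (p',r)) * M $$ (p',q'))"
        using rs q' M by (simp add: scalar_prod_def atLeast0LessThan)
      also have "\<dots> = (\<Sum>p'<k*d. if p' div d = a then cnj (K $$ (p' mod d, i)) * M $$ (p',q') else 0)"
        by (rule sum.cong) (use rs in \<open>auto simp: bd_index a_def i_def\<close>)
      also have "\<dots> = (\<Sum>p<d. cnj (K $$ ((a*d+p) mod d, i)) * M $$ (a*d+p,q'))"
        by (rule sum_block[OF a(1)])
      also have "\<dots> = (\<Sum>p<d. cnj (K $$ (p, i)) * M $$ (a*d+p,q'))"
        by (rule sum.cong) auto
      finally show ?thesis .
    qed
    have "(adj ?B * M * ?B) $$ (r,s) = (\<Sum>q'<k*d. (adj ?B * M) $$ (r,q') * ?B $$ (q',s))"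
      using rs M by (simp add: scalar_prod_def atLeast0LessThan)
    also have "\<dots> = (\<Sum>q'<k*d. if q' div d = b then (\<Sum>p<d. cnj (K $$ (p,i)) * M $$ (a*d+p, q')) * K $$ (q' mod d, j) else 0)"
      by (rule sum.cong) (use rs in \<open>auto simp: inner bd_index b_def j_def\<close>)
    also have "\<dots> = (\<Sum>q<d. (\<Sum>p<d. cnj (K $$ (p,i)) * M $$ (a*d+p, b*d+q)) * K $$ ((b*d+q) mod d, j))"
      by (rule sum_block[OF b(1)])
    also have "\<dots> = (\<Sum>q<d. (\<Sum>p<d. cnj (K $$ (p,i)) * M $$ (a*d+p, b*d+q)) * K $$ (q, j))"
      by (rule sum.cong) auto
    finally show ?thesis by simp
  qed
  finally show "ampliation d k (\<lambda>X. adj K * X * K) M $$ (r,s) = (adj ?B * M * ?B) $$ (r,s)" .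
qed (auto simp: bd_def)

lemma cp_congr: assumes K: "K \<in> carrier_mat d d"
  shows "completely_positive d (\<lambda>X. adj K * X * K)"
  unfolding completely_positive_def
proof (intro allI impI)
  fix k M assume M: "psd (k*d) M"
  hence "M \<in> carrier_mat (k*d) (k*d)" by (simp add: psd_iff)
  thus "psd (k*d) (ampliation d k (\<lambda>X. adj K * X * K) M)"
    using amp_congr[OF K] psd_congr[OF M bd_carrier] by simp
qed

lemma cp_comp: assumes "completely_positive d L1" "completely_positive d L2"
  "\<And>X. X \<in> carrier_mat d d \<Longrightarrow> L2 X \<in> carrier_mat d d"
  shows "completely_positive d (\<lambda>X. L1 (L2 X))"
  using assms unfolding completely_positive_def by (simp add: amp_comp)

lemma cp_add: assumes "completely_positive d L1" "completely_positive d L2"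
  "\<And>X. X \<in> carrier_mat d d \<Longrightarrow> L1 X \<in> carrier_mat d d"
  "\<And>X. X \<in> carrier_mat d d \<Longrightarrow> L2 X \<in> carrier_mat d d"
  shows "completely_positive d (\<lambda>X. L1 X + L2 X)"
  using assms unfolding completely_positive_def by (simp add: amp_add psd_add)

lemma cp_positive: assumes "completely_positive d L" "psd d M" "L M \<in> carrier_mat d d"
  shows "psd d (L M)"
proof -
  have "psd (1*d) M" using assms(2) by simp
  hence "psd (1*d) (ampliation d 1 L M)" using assms(1) unfolding completely_positive_def by blast
  hence "psd d (ampliation d 1 L M)" by simp
  moreover have "ampliation d 1 L M = L M" by (rule amp1) (use assms in \<open>auto simp: psd_iff\<close>)
  ultimately show ?thesis by simp
qed

lemma lin_congr: assumes K: "K \<in> carrier_mat d d" shows "Defs.linear_map d (\<lambda>X. adj K * X * K)"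
  unfolding Defs.linear_map_def
proof (intro conjI ballI allI)
  have aK: "adj K \<in> carrier_mat d d" using K by simp
  fix X :: "complex mat" assume X: "X \<in> carrier_mat d d"
  have aKX: "adj K * X \<in> carrier_mat d d" using aK X by (rule mult_carrier_mat)
  show "adj K * X * K \<in> carrier_mat d d" using aKX K by (rule mult_carrier_mat)
  {
    fix Y :: "complex mat" assume Y: "Y \<in> carrier_mat d d"
    have aKY: "adj K * Y \<in> carrier_mat d d" using aK Y by (rule mult_carrier_mat)
    have "adj K * (X + Y) = adj K * X + adj K * Y" by (rule mult_add_distrib_mat[OF aK X Y])
    moreover have "(adj K * X + adj K * Y) * K = adj K * X * K + adj K * Y * K"
      by (rule add_mult_distrib_mat[OF aKX aKY K])
    ultimately show "adj K * (X + Y) * K = adj K * X * K + adj K * Y * K" by simp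
  }
  fix c :: complex
  have "adj K * (c \<cdot>\<^sub>m X) = c \<cdot>\<^sub>m (adj K * X)" by (rule mult_smult_distrib[OF aK X])
  moreover have "(c \<cdot>\<^sub>m (adj K * X)) * K = c \<cdot>\<^sub>m (adj K * X * K)" by (rule mult_smult_assoc_mat[OF aKX K])
  ultimately show "adj K * (c \<cdot>\<^sub>m X) * K = c \<cdot>\<^sub>m (adj K * X * K)" by simp
qed

lemma lin_comp: assumes "Defs.linear_map d L1" "Defs.linear_map d L2"
  shows "Defs.linear_map d (\<lambda>X. L1 (L2 X))"
  using assms unfolding Defs.linear_map_def by simp

lemma lin_add: assumes L1: "Defs.linear_map d L1" and L2: "Defs.linear_map d L2"
  shows "Defs.linear_map d (\<lambda>X. L1 X + L2 X)"
  unfolding Defs.linear_map_def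
proof (intro conjI ballI allI)
  note l1 = linear_mapD[OF L1] and l2 = linear_mapD[OF L2]
  fix X :: "complex mat" assume X: "X \<in> carrier_mat d d"
  show "L1 X + L2 X \<in> carrier_mat d d" using l1(1)[OF X] l2(1)[OF X] by simp
  {
    fix Y :: "complex mat" assume Y: "Y \<in> carrier_mat d d"
    have c: "L1 X \<in> carrier_mat d d" "L1 Y \<in> carrier_mat d d" "L2 X \<in> carrier_mat d d" "L2 Y \<in> carrier_mat d d"
      using l1(1) l2(1) X Y by auto
    show "L1 (X + Y) + L2 (X + Y) = L1 X + L2 X + (L1 Y + L2 Y)"
      unfolding l1(2)[OF X Y] l2(2)[OF X Y] by (rule eq_matI) (use c in auto)
  }
  fix a :: complex
  have c: "L1 X \<in> carrier_mat d d" "L2 X \<in> carrier_mat d d" using l1(1) l2(1) X by auto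
  show "L1 (a \<cdot>\<^sub>m X) + L2 (a \<cdot>\<^sub>m X) = a \<cdot>\<^sub>m (L1 X + L2 X)"
    unfolding l1(3)[OF X] l2(3)[OF X] by (rule add_smult_distrib_left_mat[OF c, symmetric])
qed

lemma trace_congr: assumes K: "K \<in> carrier_mat d d" and X: "X \<in> carrier_mat d d" and Y: "Y \<in> carrier_mat d d"
  shows "mtrace (adj K * X * K * Y) = mtrace (X * (K * Y * adj K))"
proof -
  note sq = assoc_mult_mat[of _ d d _ d _ d] mult_carrier_mat[of _ d d _ d] adj_carrier[of _ d d]
  have "mtrace (adj K * X * K * Y) = mtrace (adj K * (X * K * Y))" using K X Y by (simp add: sq)
  also have "\<dots> = mtrace ((X * K * Y) * adj K)" by (rule mtrace_comm[of _ d d]) (use K X Y in \<open>simp_all add: sq\<close>)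
  also have "\<dots> = mtrace (X * (K * Y * adj K))" using K X Y by (simp add: sq)
  finally show ?thesis .
qed

lemma dual_congr: assumes K: "K \<in> carrier_mat d d"
  shows "dual_map d (\<lambda>X. adj K * X * K) (1\<^sub>m d) = K * adj K"
proof (rule dual_char)
  show "K * adj K \<in> carrier_mat d d" using K by (simp add: mult_carrier_mat[of _ d d _ d])
  show "\<forall>X\<in>carrier_mat d d. mtrace (adj K * X * K * 1\<^sub>m d) = mtrace (X * (K * adj K))"
  proof
    fix X :: "complex mat" assume X: "X \<in> carrier_mat d d"
    have "mtrace (adj K * X * K * 1\<^sub>m d) = mtrace (X * (K * 1\<^sub>m d * adj K))"
      by (rule trace_congr[OF K X one_carrier_mat])
    thus "mtrace (adj K * X * K * 1\<^sub>m d) = mtrace (X * (K * adj K))" using K by simp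
  qed
qed

lemma fc_zero: assumes "unitary n U" shows "fc U n (\<lambda>_. 0) = 0\<^sub>m n n"
proof -
  have U: "U \<in> carrier_mat n n" using assms by (simp add: unitary_def)
  have "fc U n (\<lambda>_. 0) = U * 0\<^sub>m n n * adj U" by (simp add: fc_def dm_zero)
  also have "U * 0\<^sub>m n n = 0\<^sub>m n n" by (rule right_mult_zero_mat[OF U])
  also have "0\<^sub>m n n * adj U = 0\<^sub>m n n" by (rule left_mult_zero_mat) (use U in simp)
  finally show ?thesis .
qed

lemma herm_fc: assumes "unitary n U" "\<And>i. i < n \<Longrightarrow> cnj (f i) = f i"
  shows "adj (fc U n f) = fc U n f"
  unfolding adj_fc[OF assms(1)] by (rule fc_cong) (use assms in auto)

lemma mult_unit_vec_index: fixes Q :: "complex mat" assumes "Q \<in> carrier_mat d d" "j < d" "b < d"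
  shows "(Q *\<^sub>v unit_vec d j) $ b = Q $$ (b,j)"
proof -
  have "(Q *\<^sub>v unit_vec d j) $ b = row Q b \<bullet> unit_vec d j" using assms by simp
  also have "\<dots> = row Q b $ j" using assms by (subst scalar_prod_right_unit) auto
  finally show ?thesis using assms by simp
qed

lemma E_mult_Q: assumes Q: "Q \<in> carrier_mat d d" "adj Q = Q" and ij: "i < d" "j < d"
  shows "E d i j * Q = outer (unit_vec d i) (Q *\<^sub>v unit_vec d j)"
proof (rule eq_matI)
  fix a b assume "a < dim_row (outer (unit_vec d i) (Q *\<^sub>v unit_vec d j))"
    "b < dim_col (outer (unit_vec d i) (Q *\<^sub>v unit_vec d j))"
  hence ab: "a < d" "b < d" using Q by auto
  have "(E d i j * Q) $$ (a,b) = (\<Sum>c<d. E d i j $$ (a,c) * Q $$ (c,b))"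
    using ab Q by (simp add: scalar_prod_def atLeast0LessThan)
  also have "\<dots> = E d i j $$ (a,j) * Q $$ (j,b)" by (rule sum_one) (use ab ij in \<open>auto simp: E_def\<close>)
  also have "Q $$ (j,b) = cnj (Q $$ (b,j))"
    using Q ab ij by (metis adj_index carrier_matD(1) carrier_matD(2))
  finally show "(E d i j * Q) $$ (a,b) = outer (unit_vec d i) (Q *\<^sub>v unit_vec d j) $$ (a,b)"
    using ab ij Q mult_unit_vec_index[OF Q(1) ij(2) ab(2)] by (simp add: E_def)
qed (use Q in auto)

lemma Q_mult_E: assumes Q: "Q \<in> carrier_mat d d" and ij: "i < d" "j < d"
  shows "Q * E d i j = outer (Q *\<^sub>v unit_vec d i) (unit_vec d j)"
proof (rule eq_matI)
  fix a b assume "a < dim_row (outer (Q *\<^sub>v unit_vec d i) (unit_vec d j))"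
    "b < dim_col (outer (Q *\<^sub>v unit_vec d i) (unit_vec d j))"
  hence ab: "a < d" "b < d" using Q by auto
  have "(Q * E d i j) $$ (a,b) = (\<Sum>c<d. Q $$ (a,c) * E d i j $$ (c,b))"
    using ab Q by (simp add: scalar_prod_def atLeast0LessThan)
  also have "\<dots> = Q $$ (a,i) * E d i j $$ (i,b)" by (rule sum_one) (use ab ij in \<open>auto simp: E_def\<close>)
  finally show "(Q * E d i j) $$ (a,b) = outer (Q *\<^sub>v unit_vec d i) (unit_vec d j) $$ (a,b)"
    using ab ij Q mult_unit_vec_index[OF Q ij(1) ab(1)] by (simp add: E_def)
qed (use Q in auto)

lemma cp_offdiag_zero:
  assumes cp: "completely_positive d L" and lin: "Defs.linear_map d L"
    and x: "x \<in> carrier_vec d" and y: "y \<in> carrier_vec d" and yy: "L (outer y y) = 0\<^sub>m d d"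
  shows "L (outer x y) = 0\<^sub>m d d \<and> L (outer y x) = 0\<^sub>m d d"
proof -
  define u where "u = vec (2*d) (\<lambda>r. if r < d then x $ r else y $ (r - d))"
  have u: "u \<in> carrier_vec (2*d)" by (simp add: u_def)
  have "psd (2*d) (ampliation d 2 L (outer u u))"
    using cp psd_outer[OF u] unfolding completely_positive_def by blast
  note P = this
  have b01: "block d (outer u u) 0 1 = outer x y"
    by (rule eq_matI) (use x y in \<open>auto simp: u_def\<close>)
  have b10: "block d (outer u u) 1 0 = outer y x"
    by (rule eq_matI) (use x y in \<open>auto simp: u_def\<close>)
  have b11: "block d (outer u u) 1 1 = outer y y"
    by (rule eq_matI) (use x y in \<open>auto simp: u_def\<close>)
  have diag: "ampliation d 2 L (outer u u) $$ (1*d+i, 1*d+i) = 0" if "i < d" for i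
    using amp_index_block[of 1 2 1 i d i L "outer u u"] that b11 yy by simp
  have z: "ampliation d 2 L (outer u u) $$ (1*d+i, p) = 0 \<and> ampliation d 2 L (outer u u) $$ (p, 1*d+i) = 0"
    if "i < d" "p < 2*d" for i p
    by (rule psd_zero_diag[OF P _ diag[OF that(1)] that(2)]) (use that in simp)
  have c1: "L (outer x y) \<in> carrier_mat d d" "L (outer y x) \<in> carrier_mat d d"
    using linear_mapD(1)[OF lin] x y by auto
  have e1: "L (outer x y) $$ (j,i) = 0" if "j < d" "i < d" for i j
  proof -
    have "ampliation d 2 L (outer u u) $$ (0*d+j, 1*d+i) = L (outer x y) $$ (j,i)"
      using amp_index_block[of 0 2 1 j d i L "outer u u"] that b01 by simp
    moreover have "0*d+j < 2*d" using that by simp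
    ultimately show ?thesis using z[OF that(2), of "0*d+j"] by simp
  qed
  have e2: "L (outer y x) $$ (i,j) = 0" if "j < d" "i < d" for i j
  proof -
    have "ampliation d 2 L (outer u u) $$ (1*d+i, 0*d+j) = L (outer y x) $$ (i,j)"
      using amp_index_block[of 1 2 0 i d j L "outer u u"] that b10 by simp
    moreover have "0*d+j < 2*d" using that by simp
    ultimately show ?thesis using z[OF that(2), of "0*d+j"] by simp
  qed
  show ?thesis
  proof
    show "L (outer x y) = 0\<^sub>m d d" by (rule eq_matI) (use c1 e1 in auto)
    show "L (outer y x) = 0\<^sub>m d d" by (rule eq_matI) (use c1 e2 in auto)
  qed
qed

lemma qo_setup:
  assumes qo: "quantum_operation d \<Lambda>"
  shows "\<exists>G U dv. G \<in> carrier_mat d d \<and> (\<forall>X\<in>carrier_mat d d. mtrace (\<Lambda> X) = mtrace (X * G)) \<and> psd d G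
    \<and> unitary d U \<and> (\<forall>i<d. 0 \<le> dv i) \<and> 1\<^sub>m d - G = fc U d dv \<and> dual_map d \<Lambda> (1\<^sub>m d) = G"
proof -
  have linL: "Defs.linear_map d \<Lambda>" and cpL: "completely_positive d \<Lambda>" and tniL: "trace_nonincreasing d \<Lambda>"
    using qo by (auto simp: quantum_operation_def)
  define G where "G = dual_map d \<Lambda> (1\<^sub>m d)"
  from dual_exists[OF linL one_carrier_mat] have Gc: "G \<in> carrier_mat d d"
    and Gtr: "\<forall>X\<in>carrier_mat d d. mtrace (\<Lambda> X * 1\<^sub>m d) = mtrace (X * G)" by (auto simp: G_def)
  have Ltr: "mtrace (\<Lambda> X) = mtrace (X * G)" if X: "X \<in> carrier_mat d d" for X
  proof -
    have "\<Lambda> X \<in> carrier_mat d d" using linear_mapD(1)[OF linL X] .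
    hence "\<Lambda> X * 1\<^sub>m d = \<Lambda> X" by (rule right_mult_one_mat)
    thus ?thesis using Gtr X by metis
  qed
  have psdA: "psd d (1\<^sub>m d - G)" using tniL by (simp add: trace_nonincreasing_def loewner_le_def G_def)
  have psdG: "psd d G"
    unfolding psd_iff
  proof (intro conjI ballI)
    show "G \<in> carrier_mat d d" by (rule Gc)
    fix v :: "complex vec" assume v: "v \<in> carrier_vec d"
    have o: "outer v v \<in> carrier_mat d d" using v by simp
    have "qf G v = mtrace (outer v v * G)" by (rule mtrace_outer[OF Gc v, symmetric])
    also have "\<dots> = mtrace (\<Lambda> (outer v v))" by (rule Ltr[OF o, symmetric])
    finally have eq: "qf G v = mtrace (\<Lambda> (outer v v))" .
    have "psd d (\<Lambda> (outer v v))" by (rule cp_positive[OF cpL psd_outer[OF v] linear_mapD(1)[OF linL o]])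
    thus "0 \<le> qf G v" unfolding eq by (rule mtrace_psd_nonneg)
  qed
  obtain U dv where U: "unitary d U" and Aeq: "1\<^sub>m d - G = fc U d dv" and dv: "\<forall>i<d. 0 \<le> dv i"
    using psd_spectral[OF psdA] by blast
  show ?thesis using Gc Ltr psdG U Aeq dv G_def by blast
qed

lemma part1:
  assumes qo: "quantum_operation d \<Lambda>"
    and Gc: "G \<in> carrier_mat d d" and Ltr: "\<forall>X\<in>carrier_mat d d. mtrace (\<Lambda> X) = mtrace (X * G)"
    and psdG: "psd d G" and S: "S \<in> carrier_mat d d" "adj S = S" "S * S = 1\<^sub>m d - G"
  shows "is_extension d \<Lambda> (\<lambda>\<rho>. S * \<rho> * S)"
proof -
  have linL: "Defs.linear_map d \<Lambda>" using qo by (auto simp: quantum_operation_def)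
  have f: "(\<lambda>\<rho>. S * \<rho> * S) = (\<lambda>X. adj S * X * S)" using S by simp
  have Ac: "1\<^sub>m d - G \<in> carrier_mat d d" by (rule minus_carrier_mat[OF Gc])
  have qo2: "quantum_operation d (\<lambda>\<rho>. S * \<rho> * S)"
    unfolding quantum_operation_def f
  proof (intro conjI)
    show "Defs.linear_map d (\<lambda>X. adj S * X * S)" by (rule lin_congr[OF S(1)])
    show "completely_positive d (\<lambda>X. adj S * X * S)" by (rule cp_congr[OF S(1)])
    have "dual_map d (\<lambda>X. adj S * X * S) (1\<^sub>m d) = S * adj S" by (rule dual_congr[OF S(1)])
    also have "\<dots> = 1\<^sub>m d - G" using S by simp
    finally have du: "dual_map d (\<lambda>X. adj S * X * S) (1\<^sub>m d) = 1\<^sub>m d - G" .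
    have "1\<^sub>m d - (1\<^sub>m d - G) = G" by (rule eq_matI) (use Gc in auto)
    thus "trace_nonincreasing d (\<lambda>X. adj S * X * S)"
      unfolding trace_nonincreasing_def loewner_le_def du using Ac psdG by simp
  qed
  have tp: "trace_preserving d (\<lambda>X. \<Lambda> X + S * X * S)"
    unfolding trace_preserving_def
  proof
    fix X :: "complex mat" assume X: "X \<in> carrier_mat d d"
    have LX: "\<Lambda> X \<in> carrier_mat d d" by (rule linear_mapD(1)[OF linL X])
    have SXS: "S * X * S \<in> carrier_mat d d" using S X by (metis mult_carrier_mat)
    have "mtrace (\<Lambda> X + S * X * S) = mtrace (\<Lambda> X) + mtrace (S * X * S)" by (rule mtrace_add[OF LX SXS])
    also have "mtrace (\<Lambda> X) = mtrace (X * G)" using Ltr X by blast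
    also have "mtrace (S * X * S) = mtrace (adj S * X * S * 1\<^sub>m d)" using S SXS by simp
    also have "\<dots> = mtrace (X * (S * 1\<^sub>m d * adj S))" by (rule trace_congr[OF S(1) X one_carrier_mat])
    also have "S * 1\<^sub>m d * adj S = 1\<^sub>m d - G" using S by simp
    also have "mtrace (X * G) + mtrace (X * (1\<^sub>m d - G)) = mtrace (X * G + X * (1\<^sub>m d - G))"
      by (rule mtrace_add[symmetric]) (use X Gc Ac in \<open>auto intro: mult_carrier_mat\<close>)
    also have "X * G + X * (1\<^sub>m d - G) = X * (G + (1\<^sub>m d - G))" by (rule mult_add_distrib_mat[OF X Gc Ac, symmetric])
    also have "G + (1\<^sub>m d - G) = 1\<^sub>m d" by (rule eq_matI) (use Gc in auto)
    also have "X * 1\<^sub>m d = X" using X by simp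
    finally show "mtrace (\<Lambda> X + S * X * S) = mtrace X" .
  qed
  show ?thesis unfolding is_extension_def using qo2 tp by simp
qed

lemma part2:
  assumes qo: "quantum_operation d \<Lambda>"
    and Gc: "G \<in> carrier_mat d d" and Ltr: "\<forall>X\<in>carrier_mat d d. mtrace (\<Lambda> X) = mtrace (X * G)"
    and U: "unitary d U" and dv: "\<And>i. i < d \<Longrightarrow> 0 \<le> dv i" and Aeq: "1\<^sub>m d - G = fc U d dv"
    and ext: "is_extension d \<Lambda> \<Lambda>'"
  shows "\<exists>\<Phi>. quantum_channel d \<Phi> \<and> (\<forall>\<rho>\<in>carrier_mat d d. \<Lambda>' \<rho> = \<Phi> (fc U d (sqf dv) * \<rho> * fc U d (sqf dv)))"
proof -
  note sq = assoc_mult_mat[of _ d d _ d _ d] mult_carrier_mat[of _ d d _ d] adj_carrier[of _ d d]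
  define A where "A = fc U d dv"
  define S where "S = fc U d (sqf dv)"
  have linL: "Defs.linear_map d \<Lambda>" using qo by (auto simp: quantum_operation_def)
  have linL': "Defs.linear_map d \<Lambda>'" and cpL': "completely_positive d \<Lambda>'"
    and tp: "trace_preserving d (\<lambda>X. \<Lambda> X + \<Lambda>' X)"
    using ext by (auto simp: is_extension_def quantum_operation_def)
  note l' = linear_mapD[OF linL']
  have Ac: "A \<in> carrier_mat d d" and Sc: "S \<in> carrier_mat d d" using U by (auto simp: A_def S_def fc_carrier)
  have L'tr: "mtrace (\<Lambda>' X) = mtrace (X * A)" if X: "X \<in> carrier_mat d d" for X
  proof -
    have LX: "\<Lambda> X \<in> carrier_mat d d" by (rule linear_mapD(1)[OF linL X])
    have "mtrace X = mtrace (\<Lambda> X + \<Lambda>' X)" using tp X unfolding trace_preserving_def by metis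
    also have "\<dots> = mtrace (\<Lambda> X) + mtrace (\<Lambda>' X)" by (rule mtrace_add[OF LX l'(1)[OF X]])
    finally have e1: "mtrace (\<Lambda>' X) = mtrace X - mtrace (X * G)" using Ltr X by simp
    have "X * A = X * (1\<^sub>m d - G)" using Aeq by (simp add: A_def)
    also have "\<dots> = X * 1\<^sub>m d - X * G" by (rule mult_minus_distrib_mat[OF X one_carrier_mat Gc])
    finally have "mtrace (X * A) = mtrace (X * 1\<^sub>m d - X * G)" by simp
    also have "\<dots> = mtrace (X * 1\<^sub>m d) - mtrace (X * G)" by (rule mtrace_minus) (use X Gc in \<open>auto simp: sq\<close>)
    finally show ?thesis using e1 X by simp
  qed
  define tq where "tq i = (if dv i = 0 then 0 else 1 / sqf dv i)" for i
  define pq where "pq i = (if dv i = 0 then 0 else (1::complex))" for i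
  define qq where "qq i = (if dv i = 0 then 1 else (0::complex))" for i
  define T where "T = fc U d tq"
  define P where "P = fc U d pq"
  define Q where "Q = fc U d qq"
  have Tc: "T \<in> carrier_mat d d" and Pc: "P \<in> carrier_mat d d" and Qc: "Q \<in> carrier_mat d d"
    using U by (auto simp: T_def P_def Q_def fc_carrier)
  have sqf0: "sqf dv i = 0 \<longleftrightarrow> dv i = 0" if "i < d" for i using sqf_zero dv that by blast
  have hT: "adj T = T" unfolding T_def by (rule herm_fc[OF U]) (simp add: tq_def sqf_cnj)
  have hQ: "adj Q = Q" unfolding Q_def by (rule herm_fc[OF U]) (simp add: qq_def)
  have TS: "T * S = P" unfolding T_def S_def P_def fc_mult[OF U]
    by (rule fc_cong) (simp add: tq_def pq_def sqf0)
  have ST: "S * T = P" unfolding T_def S_def P_def fc_mult[OF U]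
    by (rule fc_cong) (simp add: tq_def pq_def sqf0)
  have TAT: "T * A * T = P" unfolding T_def A_def P_def fc_mult[OF U]
  proof (rule fc_cong)
    fix i assume i: "i < d"
    show "tq i * dv i * tq i = pq i"
    proof (cases "dv i = 0")
      case False
      have s: "sqf dv i \<noteq> 0" using sqf0[OF i] False by simp
      have "tq i * dv i * tq i = (1 / sqf dv i) * (sqf dv i * sqf dv i) * (1 / sqf dv i)"
        using False sqf_sq[of dv i, OF dv[OF i]] by (simp add: tq_def)
      also have "\<dots> = 1" using s by (simp add: field_simps)
      finally show ?thesis using False by (simp add: pq_def)
    qed (simp add: tq_def pq_def)
  qed
  have QS: "Q * S = 0\<^sub>m d d" unfolding Q_def S_def fc_mult[OF U] fc_zero[OF U, symmetric]
    by (rule fc_cong) (simp add: qq_def sqf0)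
  have SQ: "S * Q = 0\<^sub>m d d" unfolding Q_def S_def fc_mult[OF U] fc_zero[OF U, symmetric]
    by (rule fc_cong) (simp add: qq_def sqf0)
  have AQ: "A * Q = 0\<^sub>m d d" unfolding Q_def A_def fc_mult[OF U] fc_zero[OF U, symmetric]
    by (rule fc_cong) (simp add: qq_def)
  have QQ: "Q * Q = Q" unfolding Q_def fc_mult[OF U]
    by (rule fc_cong) (simp add: qq_def)
  have PQ: "P + Q = 1\<^sub>m d" unfolding P_def Q_def fc_add[OF U] fc_one[OF U, symmetric]
    by (rule fc_cong) (simp add: pq_def qq_def)
  have K1: "\<Lambda>' (outer (Q *\<^sub>v w) (Q *\<^sub>v w)) = 0\<^sub>m d d" if w: "w \<in> carrier_vec d" for w
  proof -
    define y where "y = Q *\<^sub>v w"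
    have y: "y \<in> carrier_vec d" using Qc w by (simp add: y_def)
    have oc: "outer y y \<in> carrier_mat d d" using y by simp
    have ps: "psd d (\<Lambda>' (outer y y))" by (rule cp_positive[OF cpL' psd_outer[OF y] l'(1)[OF oc]])
    have "mtrace (\<Lambda>' (outer y y)) = mtrace (outer y y * A)" by (rule L'tr[OF oc])
    also have "\<dots> = qf A y" by (rule mtrace_outer[OF Ac y])
    also have "\<dots> = qf (adj Q * A * Q) w" unfolding y_def by (rule qf_congr[OF Qc Ac w, symmetric])
    also have "adj Q * A * Q = Q * (A * Q)" unfolding hQ by (rule assoc_mult_mat[OF Qc Ac Qc])
    also have "\<dots> = 0\<^sub>m d d" unfolding AQ by (rule right_mult_zero_mat[OF Qc])
    also have "qf (0\<^sub>m d d) w = 0" using w by (simp add: qf_def)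
    finally have "mtrace (\<Lambda>' (outer y y)) = 0" .
    from psd_trace_zero[OF ps this] show ?thesis by (simp add: y_def)
  qed
  have K2: "\<Lambda>' (outer x (Q *\<^sub>v w)) = 0\<^sub>m d d \<and> \<Lambda>' (outer (Q *\<^sub>v w) x) = 0\<^sub>m d d"
    if x: "x \<in> carrier_vec d" and w: "w \<in> carrier_vec d" for x w
    by (rule cp_offdiag_zero[OF cpL' linL' x _ K1[OF w]]) (use Qc w in simp)
  have fzero: "\<Lambda>' (F X) = 0\<^sub>m d d"
    if X: "X \<in> carrier_mat d d"
      and Fc: "\<And>Y. Y \<in> carrier_mat d d \<Longrightarrow> F Y \<in> carrier_mat d d"
      and Fadd: "\<And>Y Z. Y \<in> carrier_mat d d \<Longrightarrow> Z \<in> carrier_mat d d \<Longrightarrow> F (Y + Z) = F Y + F Z"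
      and Fsm: "\<And>Y c. Y \<in> carrier_mat d d \<Longrightarrow> F (c \<cdot>\<^sub>m Y) = c \<cdot>\<^sub>m F Y"
      and FE: "\<And>i j. i < d \<Longrightarrow> j < d \<Longrightarrow> \<Lambda>' (F (E d i j)) = 0\<^sub>m d d"
    for X F
  proof (rule eq_matI)
    fix p q assume "p < dim_row (0\<^sub>m d d :: complex mat)" "q < dim_col (0\<^sub>m d d :: complex mat)"
    hence pq: "p < d" "q < d" by auto
    have "\<Lambda>' (F X) $$ (p,q) = (\<Sum>i<d. \<Sum>j<d. X $$ (i,j) * \<Lambda>' (F (E d i j)) $$ (p,q))"
    proof (rule lin_repr[of d "\<lambda>Y. \<Lambda>' (F Y) $$ (p,q)"])
      fix Y Z :: "complex mat" assume Y: "Y \<in> carrier_mat d d" and Z: "Z \<in> carrier_mat d d"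
      have c: "\<Lambda>' (F Y) \<in> carrier_mat d d" "\<Lambda>' (F Z) \<in> carrier_mat d d" using l'(1) Fc Y Z by auto
      show "\<Lambda>' (F (Y + Z)) $$ (p,q) = \<Lambda>' (F Y) $$ (p,q) + \<Lambda>' (F Z) $$ (p,q)"
        using Fadd[OF Y Z] l'(2)[OF Fc[OF Y] Fc[OF Z]] c pq by simp
    next
      fix Y :: "complex mat" and c :: complex assume Y: "Y \<in> carrier_mat d d"
      have cc: "\<Lambda>' (F Y) \<in> carrier_mat d d" using l'(1) Fc Y by auto
      show "\<Lambda>' (F (c \<cdot>\<^sub>m Y)) $$ (p,q) = c * \<Lambda>' (F Y) $$ (p,q)"
        using Fsm[OF Y] l'(3)[OF Fc[OF Y]] cc pq by simp
    qed (rule X)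
    also have "\<dots> = 0" using FE pq by simp
    finally show "\<Lambda>' (F X) $$ (p,q) = 0\<^sub>m d d $$ (p,q)" using pq by simp
  qed (use l'(1) Fc X in auto)
  have K3: "\<Lambda>' (X * Q) = 0\<^sub>m d d" if X: "X \<in> carrier_mat d d" for X
  proof (rule fzero[OF X, of "\<lambda>Y. Y * Q"])
    show "\<And>Y. Y \<in> carrier_mat d d \<Longrightarrow> Y * Q \<in> carrier_mat d d" using Qc by (simp add: sq)
    show "\<And>Y Z. Y \<in> carrier_mat d d \<Longrightarrow> Z \<in> carrier_mat d d \<Longrightarrow> (Y + Z) * Q = Y * Q + Z * Q"
      using Qc by (simp add: add_mult_distrib_mat)
    show "\<And>Y c. Y \<in> carrier_mat d d \<Longrightarrow> (c \<cdot>\<^sub>m Y) * Q = c \<cdot>\<^sub>m (Y * Q)"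
      using Qc by (simp add: mult_smult_assoc_mat)
    fix i j assume ij: "i < d" "j < d"
    show "\<Lambda>' (E d i j * Q) = 0\<^sub>m d d" unfolding E_mult_Q[OF Qc hQ ij]
      using K2[of "unit_vec d i" "unit_vec d j"] ij by simp
  qed
  have K4: "\<Lambda>' (Q * X) = 0\<^sub>m d d" if X: "X \<in> carrier_mat d d" for X
  proof (rule fzero[OF X, of "\<lambda>Y. Q * Y"])
    show "\<And>Y. Y \<in> carrier_mat d d \<Longrightarrow> Q * Y \<in> carrier_mat d d" using Qc by (simp add: sq)
    show "\<And>Y Z. Y \<in> carrier_mat d d \<Longrightarrow> Z \<in> carrier_mat d d \<Longrightarrow> Q * (Y + Z) = Q * Y + Q * Z"
      using Qc by (simp add: mult_add_distrib_mat)
    show "\<And>Y c. Y \<in> carrier_mat d d \<Longrightarrow> Q * (c \<cdot>\<^sub>m Y) = c \<cdot>\<^sub>m (Q * Y)"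
      using Qc by (simp add: mult_smult_distrib)
    fix i j assume ij: "i < d" "j < d"
    show "\<Lambda>' (Q * E d i j) = 0\<^sub>m d d" unfolding Q_mult_E[OF Qc ij]
      using K2[of "unit_vec d j" "unit_vec d i"] ij by simp
  qed
  have KP: "\<Lambda>' (P * \<rho> * P) = \<Lambda>' \<rho>" if r: "\<rho> \<in> carrier_mat d d" for \<rho>
  proof -
    have rP: "\<rho> * P \<in> carrier_mat d d" using r Pc by (simp add: sq)
    have rQ: "\<rho> * Q \<in> carrier_mat d d" using r Qc by (simp add: sq)
    have PrP: "P * (\<rho> * P) \<in> carrier_mat d d" using rP Pc by (simp add: sq)
    have QrP: "Q * (\<rho> * P) \<in> carrier_mat d d" using rP Qc by (simp add: sq)
    have "\<rho> = \<rho> * (P + Q)" unfolding PQ by (rule right_mult_one_mat[OF r, symmetric])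
    also have "\<dots> = \<rho> * P + \<rho> * Q" by (rule mult_add_distrib_mat[OF r Pc Qc])
    finally have "\<Lambda>' \<rho> = \<Lambda>' (\<rho> * P + \<rho> * Q)" by simp
    also have "\<dots> = \<Lambda>' (\<rho> * P) + \<Lambda>' (\<rho> * Q)" by (rule l'(2)[OF rP rQ])
    also have "\<Lambda>' (\<rho> * Q) = 0\<^sub>m d d" by (rule K3[OF r])
    also have "\<Lambda>' (\<rho> * P) + 0\<^sub>m d d = \<Lambda>' (\<rho> * P)" using l'(1)[OF rP] by simp
    also have "\<rho> * P = (P + Q) * (\<rho> * P)" unfolding PQ by (rule left_mult_one_mat[OF rP, symmetric])
    also have "\<dots> = P * (\<rho> * P) + Q * (\<rho> * P)" by (rule add_mult_distrib_mat[OF Pc Qc rP])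
    also have "\<Lambda>' \<dots> = \<Lambda>' (P * (\<rho> * P)) + \<Lambda>' (Q * (\<rho> * P))" by (rule l'(2)[OF PrP QrP])
    also have "\<Lambda>' (Q * (\<rho> * P)) = 0\<^sub>m d d" by (rule K4[OF rP])
    also have "\<Lambda>' (P * (\<rho> * P)) + 0\<^sub>m d d = \<Lambda>' (P * (\<rho> * P))" using l'(1)[OF PrP] by simp
    also have "P * (\<rho> * P) = P * \<rho> * P" using Pc r by (simp add: sq)
    finally show ?thesis by simp
  qed
  define \<Phi> where "\<Phi> = (\<lambda>X. \<Lambda>' (adj T * X * T) + adj Q * X * Q)"
  have cT: "\<And>X. X \<in> carrier_mat d d \<Longrightarrow> adj T * X * T \<in> carrier_mat d d" using Tc by (simp add: sq)
  have cQ: "\<And>X. X \<in> carrier_mat d d \<Longrightarrow> adj Q * X * Q \<in> carrier_mat d d" using Qc by (simp add: sq)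
  have cL'T: "\<And>X. X \<in> carrier_mat d d \<Longrightarrow> \<Lambda>' (adj T * X * T) \<in> carrier_mat d d" using l'(1) cT by blast
  have linPhi: "Defs.linear_map d \<Phi>"
    unfolding \<Phi>_def by (rule lin_add[OF lin_comp[OF linL' lin_congr[OF Tc]] lin_congr[OF Qc]])
  have cpPhi: "completely_positive d \<Phi>"
    unfolding \<Phi>_def by (rule cp_add[OF cp_comp[OF cpL' cp_congr[OF Tc] cT] cp_congr[OF Qc] cL'T cQ])
  have tpPhi: "trace_preserving d \<Phi>"
    unfolding trace_preserving_def
  proof
    fix X :: "complex mat" assume X: "X \<in> carrier_mat d d"
    have "mtrace (\<Phi> X) = mtrace (\<Lambda>' (adj T * X * T)) + mtrace (adj Q * X * Q)"
      unfolding \<Phi>_def by (rule mtrace_add[OF cL'T[OF X] cQ[OF X]])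
    also have "mtrace (\<Lambda>' (adj T * X * T)) = mtrace (adj T * X * T * A)" by (rule L'tr[OF cT[OF X]])
    also have "\<dots> = mtrace (X * (T * A * adj T))" by (rule trace_congr[OF Tc X Ac])
    also have "T * A * adj T = P" using TAT hT by simp
    also have "mtrace (adj Q * X * Q) = mtrace (adj Q * X * Q * 1\<^sub>m d)" by (simp only: right_mult_one_mat[OF cQ[OF X]])
    also have "\<dots> = mtrace (X * (Q * 1\<^sub>m d * adj Q))" by (rule trace_congr[OF Qc X one_carrier_mat])
    also have "Q * 1\<^sub>m d * adj Q = Q" using right_mult_one_mat[OF Qc] QQ hQ by simp
    also have "mtrace (X * P) + mtrace (X * Q) = mtrace (X * P + X * Q)"
      by (rule mtrace_add[of _ d, symmetric]) (use X Pc Qc in \<open>simp_all add: sq\<close>)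
    also have "X * P + X * Q = X * (P + Q)" by (rule mult_add_distrib_mat[OF X Pc Qc, symmetric])
    also have "\<dots> = X" unfolding PQ by (rule right_mult_one_mat[OF X])
    finally show "mtrace (\<Phi> X) = mtrace X" .
  qed
  have eq: "\<Lambda>' \<rho> = \<Phi> (S * \<rho> * S)" if r: "\<rho> \<in> carrier_mat d d" for \<rho>
  proof -
    have "adj T * (S * \<rho> * S) * T = (T * S) * \<rho> * (S * T)" unfolding hT using Tc Sc r by (simp add: sq)
    also have "\<dots> = P * \<rho> * P" by (simp add: TS ST)
    finally have e1: "adj T * (S * \<rho> * S) * T = P * \<rho> * P" .
    have "adj Q * (S * \<rho> * S) * Q = (Q * S) * \<rho> * (S * Q)" unfolding hQ using Qc Sc r by (simp add: sq)
    also have "\<dots> = 0\<^sub>m d d" unfolding QS SQ using r by simp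
    finally have e2: "adj Q * (S * \<rho> * S) * Q = 0\<^sub>m d d" .
    have "\<Phi> (S * \<rho> * S) = \<Lambda>' (P * \<rho> * P) + 0\<^sub>m d d" unfolding \<Phi>_def e1 e2 ..
    also have "\<dots> = \<Lambda>' (P * \<rho> * P)"
    proof -
      have "P * \<rho> * P \<in> carrier_mat d d" using Pc r by (simp add: sq)
      thus ?thesis using l'(1) by simp
    qed
    also have "\<dots> = \<Lambda>' \<rho>" by (rule KP[OF r])
    finally show ?thesis by simp
  qed
  have "quantum_channel d \<Phi>" unfolding quantum_channel_def using linPhi cpPhi tpPhi by simp
  thus ?thesis using eq unfolding S_def by blast
qed

theorem proposition1:
  fixes d :: nat and \<Lambda> :: "complex mat \<Rightarrow> complex mat"
  assumes "d > 1" and "quantum_operation d \<Lambda>"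
  shows "is_extension d \<Lambda> (min_extension d \<Lambda>) \<and>
         (\<forall>\<Lambda>'. is_extension d \<Lambda> \<Lambda>' \<longrightarrow>
            (\<exists>\<Phi>. quantum_channel d \<Phi> \<and>
                 (\<forall>\<rho> \<in> carrier_mat d d. \<Lambda>' \<rho> = \<Phi> (min_extension d \<Lambda> \<rho>))))"
proof -
  obtain G U dv where Gc: "G \<in> carrier_mat d d" and Ltr: "\<forall>X\<in>carrier_mat d d. mtrace (\<Lambda> X) = mtrace (X * G)"
    and psdG: "psd d G" and U: "unitary d U" and dv: "\<forall>i<d. 0 \<le> dv i" and Aeq: "1\<^sub>m d - G = fc U d dv"
    and du: "dual_map d \<Lambda> (1\<^sub>m d) = G"
    using qo_setup[OF assms(2)] by blast
  have dv': "\<And>i. i < d \<Longrightarrow> 0 \<le> dv i" using dv by blast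
  define S where "S = fc U d (sqf dv)"
  have sqrtA: "psd_sqrt d (1\<^sub>m d - G) = S" unfolding Aeq S_def by (rule psd_sqrt_fc[OF U dv'])
  have me: "min_extension d \<Lambda> = (\<lambda>\<rho>. S * \<rho> * S)"
    by (rule ext) (simp add: min_extension_def du sqrtA)
  have Sc: "S \<in> carrier_mat d d" unfolding S_def by (rule fc_carrier[OF U])
  have hS: "adj S = S" unfolding S_def by (rule herm_fc[OF U]) (simp add: sqf_cnj)
  have SS: "S * S = 1\<^sub>m d - G" unfolding S_def Aeq fc_mult[OF U]
    by (rule fc_cong) (simp add: sqf_sq dv')
  show ?thesis
  proof
    show "is_extension d \<Lambda> (min_extension d \<Lambda>)"
      unfolding me by (rule part1[OF assms(2) Gc Ltr psdG Sc hS SS])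
    show "\<forall>\<Lambda>'. is_extension d \<Lambda> \<Lambda>' \<longrightarrow>
            (\<exists>\<Phi>. quantum_channel d \<Phi> \<and> (\<forall>\<rho> \<in> carrier_mat d d. \<Lambda>' \<rho> = \<Phi> (min_extension d \<Lambda> \<rho>)))"
    proof (intro allI impI)
      fix \<Lambda>' assume "is_extension d \<Lambda> \<Lambda>'"
      from part2[OF assms(2) Gc Ltr U dv' Aeq this]
      show "\<exists>\<Phi>. quantum_channel d \<Phi> \<and> (\<forall>\<rho> \<in> carrier_mat d d. \<Lambda>' \<rho> = \<Phi> (min_extension d \<Lambda> \<rho>))"
        unfolding me S_def by simp
    qed
  qed
qed

end
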